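(* A homogeneous Poisson point process $\Phi$ on $\mathbb{R}^d$ almost surely contains no second-order descending chain.
   Context: A second-order descending chain in a point process $N$ is an infinite sequence $(x_n)_{n\ge0}$ of pairwise distinct points of $N$ such that $d_i<\max(d_{i-1},d_{i-2})$ for all $i\ge 2$, where $d_i=\|x_{i+1}-x_i\|$. *)

theory Defs
  imports "HOL-Probability.Probability"
begin

text \<open>Points of the process live in a Euclidean space 'a (playing the role of R^d, with
  the Euclidean norm). A (simple) point process is modelled as a random locally finite
  set of points  Phi :: 'w => 'a set  on a probability space M.\<close>

definition homogeneous_PPP :: "'w measure \<Rightarrow> real \<Rightarrow> ('w \<Rightarrow> 'a::euclidean_space set) \<Rightarrow> bool" where
  "homogeneous_PPP M lam Phi \<longleftrightarrow>
     prob_space M \<and> lam > 0 \<and>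
     (\<forall>\<omega>\<in>space M. \<forall>B. bounded B \<longrightarrow> finite (Phi \<omega> \<inter> B)) \<and>
     (\<forall>B. B \<in> sets lborel \<and> bounded B \<longrightarrow>
        (\<lambda>\<omega>. card (Phi \<omega> \<inter> B)) \<in> measurable M (count_space UNIV) \<and>
        (\<forall>k::nat. measure M {\<omega>\<in>space M. card (Phi \<omega> \<inter> B) = k} =
            (lam * measure lborel B) ^ k / fact k * exp (- (lam * measure lborel B)))) \<and>
     (\<forall>(I::nat set) (B::nat \<Rightarrow> 'a set). finite I \<and> (\<forall>i\<in>I. B i \<in> sets lborel \<and> bounded (B i))
        \<and> disjoint_family_on B I \<longrightarrow>
        prob_space.indep_vars M (\<lambda>_. count_space UNIV) (\<lambda>i \<omega>. card (Phi \<omega> \<inter> B i)) I)"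

definition second_order_descending_chain :: "'a::real_normed_vector set \<Rightarrow> (nat \<Rightarrow> 'a) \<Rightarrow> bool" where
  "second_order_descending_chain N x \<longleftrightarrow>
     inj x \<and> (\<forall>n. x n \<in> N) \<and>
     (\<forall>i\<ge>2. norm (x (Suc i) - x i) <
             max (norm (x i - x (i - 1))) (norm (x (i - 1) - x (i - 2))))"

end

theory Submission
  imports Defs "HOL-Library.Multiset"
begin

definition lat :: "'a::euclidean_space set" where
  "lat = {w. \<forall>b\<in>Basis. w \<bullet> b \<in> \<int>}"

definition qi :: "real \<Rightarrow> 'a::euclidean_space \<Rightarrow> 'a" where
  "qi \<delta> x = (\<Sum>b\<in>Basis. of_int \<lfloor>x \<bullet> b / \<delta>\<rfloor> *\<^sub>R b)"

definition cube :: "real \<Rightarrow> 'a::euclidean_space \<Rightarrow> 'a set" where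
  "cube \<delta> w = {x. qi \<delta> x = w}"

lemma qi_inner: "b \<in> Basis \<Longrightarrow> qi \<delta> x \<bullet> b = of_int \<lfloor>x \<bullet> b / \<delta>\<rfloor>"
  unfolding qi_def by (simp add: inner_sum_left inner_Basis if_distrib sum.delta cong: if_cong)

lemma qi_lat: "qi \<delta> x \<in> lat"
  unfolding lat_def by (simp add: qi_inner)

lemma floor_bounds:
  fixes \<delta> y :: real
  assumes "\<delta> > 0"
  shows "\<delta> * of_int \<lfloor>y / \<delta>\<rfloor> \<le> y" "y < \<delta> * of_int \<lfloor>y / \<delta>\<rfloor> + \<delta>"
proof -
  have "\<delta> * of_int \<lfloor>y / \<delta>\<rfloor> \<le> \<delta> * (y / \<delta>)"
    by (rule mult_left_mono) (use assms in auto)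
  thus "\<delta> * of_int \<lfloor>y / \<delta>\<rfloor> \<le> y" using assms by simp
  have "y / \<delta> < of_int \<lfloor>y / \<delta>\<rfloor> + 1" by linarith
  hence "\<delta> * (y / \<delta>) < \<delta> * (of_int \<lfloor>y / \<delta>\<rfloor> + 1)"
    by (rule mult_strict_left_mono) (use assms in auto)
  thus "y < \<delta> * of_int \<lfloor>y / \<delta>\<rfloor> + \<delta>" using assms by (simp add: algebra_simps)
qed

lemma qi_approx:
  fixes x :: "'a::euclidean_space" and \<delta> :: real
  assumes "\<delta> > 0"
  shows "norm (x - \<delta> *\<^sub>R qi \<delta> x) \<le> DIM('a) * \<delta>"
proof -
  have "norm (x - \<delta> *\<^sub>R qi \<delta> x) \<le> (\<Sum>b\<in>Basis. \<bar>(x - \<delta> *\<^sub>R qi \<delta> x) \<bullet> b\<bar>)"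
    by (rule norm_le_l1)
  also have "\<dots> \<le> (\<Sum>b\<in>(Basis::'a set). \<delta>)"
  proof (rule sum_mono)
    fix b :: 'a assume b: "b \<in> Basis"
    have "(x - \<delta> *\<^sub>R qi \<delta> x) \<bullet> b = x \<bullet> b - \<delta> * of_int \<lfloor>x \<bullet> b / \<delta>\<rfloor>"
      using b by (simp add: inner_diff_left qi_inner)
    moreover note floor_bounds[OF assms, of "x \<bullet> b"]
    ultimately show "\<bar>(x - \<delta> *\<^sub>R qi \<delta> x) \<bullet> b\<bar> \<le> \<delta>" by simp
  qed
  also have "\<dots> = DIM('a) * \<delta>" by simp
  finally show ?thesis .
qed

lemma qi_borel: "qi \<delta> \<in> borel_measurable (borel :: 'a::euclidean_space measure)"
  unfolding qi_def by (intro borel_measurable_sum borel_measurable_scaleR borel_measurable_const) measurable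

lemma cube_borel: "cube \<delta> w \<in> sets (lborel :: 'a::euclidean_space measure)"
proof -
  have "cube \<delta> w = qi \<delta> -` {w} \<inter> space borel" by (auto simp: cube_def)
  also have "\<dots> \<in> sets borel" by (rule measurable_sets[OF qi_borel]) simp
  finally show ?thesis by simp
qed

lemma cube_subset_cbox:
  fixes w :: "'a::euclidean_space" and \<delta> :: real
  assumes "\<delta> > 0"
  shows "cube \<delta> w \<subseteq> cbox (\<delta> *\<^sub>R w) (\<delta> *\<^sub>R w + \<delta> *\<^sub>R One)"
proof
  fix x assume "x \<in> cube \<delta> w"
  hence q: "qi \<delta> x = w" by (simp add: cube_def)
  show "x \<in> cbox (\<delta> *\<^sub>R w) (\<delta> *\<^sub>R w + \<delta> *\<^sub>R One)"
    unfolding mem_box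
  proof (intro ballI conjI)
    fix b :: 'a assume b: "b \<in> Basis"
    have wb: "w \<bullet> b = of_int \<lfloor>x \<bullet> b / \<delta>\<rfloor>" using q b by (auto simp: qi_inner)
    note floor_bounds[OF assms, of "x \<bullet> b"]
    thus "(\<delta> *\<^sub>R w) \<bullet> b \<le> x \<bullet> b" "x \<bullet> b \<le> (\<delta> *\<^sub>R w + \<delta> *\<^sub>R One) \<bullet> b"
      using b wb by (simp_all add: inner_add_left)
  qed
qed

lemma cube_measure:
  fixes w :: "'a::euclidean_space"
  assumes "\<delta> > 0"
  shows "measure lborel (cube \<delta> w) \<le> \<delta> ^ DIM('a)"
proof -
  have "measure lborel (cube \<delta> w) \<le> measure lborel (cbox (\<delta> *\<^sub>R w) (\<delta> *\<^sub>R w + \<delta> *\<^sub>R One))"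
    by (rule measure_mono_fmeasurable[OF cube_subset_cbox[OF assms] cube_borel]) simp
  also have "\<dots> = \<delta> ^ DIM('a)"
    using assms by (simp add: inner_add_left prod_constant)
  finally show ?thesis .
qed

lemma cube_bounded:
  fixes w :: "'a::euclidean_space"
  assumes "\<delta> > 0"
  shows "bounded (cube \<delta> w)"
  by (rule bounded_subset[OF bounded_cbox cube_subset_cbox[OF assms]])

lemma box_subset_cube:
  fixes w :: "'a::euclidean_space"
  assumes "\<delta> > 0" "w \<in> lat"
  shows "box (\<delta> *\<^sub>R w) (\<delta> *\<^sub>R w + \<delta> *\<^sub>R One) \<subseteq> cube \<delta> w"
proof
  fix y assume y: "y \<in> box (\<delta> *\<^sub>R w) (\<delta> *\<^sub>R w + \<delta> *\<^sub>R One)"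
  have "qi \<delta> y \<bullet> b = w \<bullet> b" if b: "b \<in> Basis" for b
  proof -
    have "w \<bullet> b \<in> \<int>" using assms(2) b unfolding lat_def by blast
    then obtain m where m: "w \<bullet> b = of_int m" by (elim Ints_cases)
    have "\<forall>i\<in>Basis. \<delta> * (w \<bullet> i) < y \<bullet> i \<and> y \<bullet> i < \<delta> * (w \<bullet> i) + \<delta>"
      using y unfolding mem_box by (simp add: inner_add_left)
    hence "\<delta> * (w \<bullet> b) < y \<bullet> b \<and> y \<bullet> b < \<delta> * (w \<bullet> b) + \<delta>" using b by blast
    hence "\<delta> * of_int m < y \<bullet> b" "y \<bullet> b < \<delta> * of_int m + \<delta>" using m by simp_all
    hence "of_int m < y \<bullet> b / \<delta>" "y \<bullet> b / \<delta> < of_int m + 1"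
      using assms(1) by (simp_all add: pos_less_divide_eq pos_divide_less_eq algebra_simps)
    hence "\<lfloor>y \<bullet> b / \<delta>\<rfloor> = m" by (intro floor_unique) auto
    thus ?thesis using m qi_inner[OF b, of \<delta> y] by simp
  qed
  hence "qi \<delta> y = w" by (rule euclidean_eqI) blast
  thus "y \<in> cube \<delta> w" by (simp add: cube_def)
qed

lemma box_norm:
  fixes w :: "'a::euclidean_space" and \<delta> :: real
  assumes "\<delta> > 0" "y \<in> box (\<delta> *\<^sub>R w) (\<delta> *\<^sub>R w + \<delta> *\<^sub>R One)"
  shows "norm (y - \<delta> *\<^sub>R w) \<le> DIM('a) * \<delta>"
proof -
  have "norm (y - \<delta> *\<^sub>R w) \<le> (\<Sum>b\<in>Basis. \<bar>(y - \<delta> *\<^sub>R w) \<bullet> b\<bar>)" by (rule norm_le_l1)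
  also have "\<dots> \<le> (\<Sum>b\<in>(Basis::'a set). \<delta>)"
  proof (rule sum_mono)
    fix b :: 'a assume b: "b \<in> Basis"
    have "(\<delta> *\<^sub>R w) \<bullet> b < y \<bullet> b" "y \<bullet> b < (\<delta> *\<^sub>R w + \<delta> *\<^sub>R One) \<bullet> b"
      using assms(2) b unfolding mem_box by blast+
    hence "\<delta> * (w \<bullet> b) < y \<bullet> b" "y \<bullet> b < \<delta> * (w \<bullet> b) + \<delta>"
      using b by (simp_all add: inner_add_left)
    moreover have "(y - \<delta> *\<^sub>R w) \<bullet> b = y \<bullet> b - \<delta> * (w \<bullet> b)" by (simp add: inner_diff_left)
    ultimately show "\<bar>(y - \<delta> *\<^sub>R w) \<bullet> b\<bar> \<le> \<delta>" by simp
  qed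
  finally show ?thesis by simp
qed

lemma ball_content:
  assumes "r \<ge> 0"
  shows "measure lborel (ball (0::'a::euclidean_space) r) = r ^ DIM('a) * measure lborel (ball (0::'a) 1)"
  by (rule content_ball_conv_unit_ball[OF assms])

lemma cball_content:
  assumes "r \<ge> 0"
  shows "measure lborel (cball (0::'a::euclidean_space) r) = r ^ DIM('a) * measure lborel (ball (0::'a) 1)"
  using content_ball_conv_unit_ball[OF assms, of "0::'a"] content_cball_conv_ball[of "0::'a" r] by simp

lemma pow_diff_le:
  fixes A B :: real
  assumes "0 \<le> A" "A \<le> B"
  shows "B ^ n - A ^ n \<le> n * B ^ (n - 1) * (B - A)"
proof (induction n)
  case 0 thus ?case by simp
next
  case (Suc n)
  have "B ^ Suc n - A ^ Suc n = B * (B ^ n - A ^ n) + A ^ n * (B - A)" by (simp add: algebra_simps)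
  also have "\<dots> \<le> B * (n * B ^ (n - 1) * (B - A)) + B ^ n * (B - A)"
  proof (rule add_mono)
    show "B * (B ^ n - A ^ n) \<le> B * (n * B ^ (n - 1) * (B - A))"
      using Suc.IH assms by (intro mult_left_mono) auto
    show "A ^ n * (B - A) \<le> B ^ n * (B - A)"
      using assms by (intro mult_right_mono power_mono) auto
  qed
  also have "B * (n * B ^ (n - 1) * (B - A)) = n * (B * B ^ (n - 1)) * (B - A)" by simp
  also have "\<dots> = n * B ^ n * (B - A)"
    by (cases n) simp_all
  also have "n * B ^ n * (B - A) + B ^ n * (B - A) = Suc n * B ^ (Suc n - 1) * (B - A)"
    by (simp add: algebra_simps)
  finally show ?case by simp
qed

lemma lat_count_finite_subset:
  fixes \<delta> a b :: real and F :: "'a::euclidean_space set"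
  assumes d: "\<delta> > 0" and b: "0 \<le> b" and ab: "a \<le> b" and F: "finite F" "F \<subseteq> lat" 
    and Fab: "\<And>w. w \<in> F \<Longrightarrow> a \<le> \<delta> * norm w \<and> \<delta> * norm w \<le> b"
  shows "card F * \<delta> ^ DIM('a) \<le>
     measure lborel (ball (0::'a) 1) * ((b + DIM('a) * \<delta>) ^ DIM('a) - (max 0 (a - DIM('a) * \<delta>)) ^ DIM('a))"
proof -
  define B where "B = b + DIM('a) * \<delta>"
  define A where "A = max 0 (a - DIM('a) * \<delta>)"
  define bx where "bx w = box (\<delta> *\<^sub>R w) (\<delta> *\<^sub>R w + \<delta> *\<^sub>R One)" for w :: 'a
  define U where "U = (\<Union>w\<in>F. bx w)"
  have dd: "0 \<le> real DIM('a) * \<delta>" using d by simp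
  have B0: "B \<ge> 0" using b d by (simp add: B_def)
  have A0: "A \<ge> 0" by (simp add: A_def)
  have bxs: "bx w \<in> sets lborel" for w by (simp add: bx_def)
  have bxf: "emeasure lborel (bx w) \<noteq> \<infinity>" for w
    using emeasure_bounded_finite[of "bx w"] by (simp add: bx_def)
  have mbx: "measure lborel (bx w) = \<delta> ^ DIM('a)" for w
    using d by (simp add: bx_def inner_add_left prod_constant)
  have disj: "disjoint_family_on bx F"
    unfolding disjoint_family_on_def
  proof (intro ballI impI)
    fix v w assume "v \<in> F" "w \<in> F" "v \<noteq> w"
    hence "bx v \<subseteq> cube \<delta> v" "bx w \<subseteq> cube \<delta> w"
      using box_subset_cube[OF d] F(2) by (auto simp: bx_def)
    moreover have "cube \<delta> v \<inter> cube \<delta> w = {}" using \<open>v \<noteq> w\<close> by (auto simp: cube_def)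
    ultimately show "bx v \<inter> bx w = {}" by blast
  qed
  have mU: "measure lborel U = card F * \<delta> ^ DIM('a)"
    unfolding U_def using F(1) disj bxs bxf
    by (subst measure_finite_Union) (auto simp: mbx)
  have Us: "U \<in> sets lborel" unfolding U_def using F(1) bxs by blast
  have Uf: "emeasure lborel U \<noteq> \<infinity>"
  proof -
    have "bounded U" unfolding U_def using F(1) by (auto simp: bx_def)
    thus ?thesis using emeasure_bounded_finite[of U] by simp
  qed
  have inU: "A \<le> norm y \<and> norm y \<le> B" if "y \<in> U" for y
  proof -
    obtain w where w: "w \<in> F" "y \<in> bx w" using \<open>y \<in> U\<close> by (auto simp: U_def)
    have n: "norm (y - \<delta> *\<^sub>R w) \<le> DIM('a) * \<delta>" using box_norm[OF d] w(2) by (simp add: bx_def)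
    have nw: "norm (\<delta> *\<^sub>R w) = \<delta> * norm w" using d by simp
    have "norm y \<le> norm (\<delta> *\<^sub>R w) + norm (y - \<delta> *\<^sub>R w)" by (rule norm_triangle_sub)
    moreover have "norm (\<delta> *\<^sub>R w) \<le> norm y + norm (y - \<delta> *\<^sub>R w)"
      by (metis add.commute norm_triangle_sub norm_minus_commute)
    ultimately have "norm y \<le> \<delta> * norm w + DIM('a) * \<delta>" "\<delta> * norm w \<le> norm y + DIM('a) * \<delta>"
      using n nw by linarith+
    moreover have "a \<le> \<delta> * norm w" "\<delta> * norm w \<le> b" using Fab[OF w(1)] by auto
    ultimately show ?thesis unfolding A_def B_def by (intro conjI max.boundedI) (simp, linarith, linarith)
  qed
  have disj2: "U \<inter> ball 0 A = {}" using inU by (force simp: dist_norm)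
  have sub: "U \<union> ball 0 A \<subseteq> cball 0 B"
  proof -
    have AB: "A \<le> B" using ab b dd unfolding A_def B_def max_def by (auto simp: mult.commute)
    hence "ball (0::'a) A \<subseteq> cball 0 B" by auto
    thus ?thesis using inU by (auto simp: dist_norm)
  qed
  have AB: "A \<le> B" using ab b dd unfolding A_def B_def max_def by (auto simp: mult.commute)
  have "measure lborel U + measure lborel (ball (0::'a) A) = measure lborel (U \<union> ball 0 A)"
    using Uf Us disj2 emeasure_bounded_finite[of "ball (0::'a) A"]
    by (subst measure_Union) auto
  also have "\<dots> \<le> measure lborel (cball (0::'a) B)"
    by (rule measure_mono_fmeasurable[OF sub]) (use Us in \<open>auto intro: fmeasurable_compact\<close>)
  finally have "card F * \<delta> ^ DIM('a) + A ^ DIM('a) * measure lborel (ball (0::'a) 1) \<le> B ^ DIM('a) * measure lborel (ball (0::'a) 1)"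
    using mU ball_content[OF A0, where 'a='a] cball_content[OF B0, where 'a='a] by simp
  thus ?thesis unfolding A_def B_def by (simp add: algebra_simps)
qed

lemma lat_count:
  fixes \<delta> a b :: real
  assumes d: "\<delta> > 0" and b: "0 \<le> b" and ab: "a \<le> b"
  defines "S \<equiv> {w::'a::euclidean_space. w \<in> lat \<and> a \<le> \<delta> * norm w \<and> \<delta> * norm w \<le> b}"
  shows "finite S" "card S * \<delta> ^ DIM('a) \<le>
     measure lborel (ball (0::'a) 1) * ((b + DIM('a) * \<delta>) ^ DIM('a) - (max 0 (a - DIM('a) * \<delta>)) ^ DIM('a))"
proof -
  define V where "V = measure lborel (ball (0::'a) 1) * ((b + DIM('a) * \<delta>) ^ DIM('a) - (max 0 (a - DIM('a) * \<delta>)) ^ DIM('a))"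
  have key: "card F * \<delta> ^ DIM('a) \<le> V" if "finite F" "F \<subseteq> S" for F
    unfolding V_def using lat_count_finite_subset[OF d b ab that(1)] that(2) by (auto simp: S_def)
  show "finite S"
  proof (rule ccontr)
    assume "infinite S"
    define n where "n = nat \<lceil>V / \<delta> ^ DIM('a)\<rceil> + 1"
    obtain F where F: "finite F" "F \<subseteq> S" "card F = n"
      using infinite_arbitrarily_large[OF \<open>infinite S\<close>] by blast
    have "V / \<delta> ^ DIM('a) < n" unfolding n_def by linarith
    hence "V < n * \<delta> ^ DIM('a)" using d by (simp add: divide_less_eq)
    thus False using key[OF F(1,2)] F(3) by simp
  qed
  thus "card S * \<delta> ^ DIM('a) \<le> V" using key by blast
qed

definition levels :: "nat \<Rightarrow> nat \<Rightarrow> (nat \<Rightarrow> nat) set" where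
  "levels k H = {l \<in> {..<k} \<rightarrow>\<^sub>E {..H}. \<forall>i j. i \<le> j \<longrightarrow> j < k \<longrightarrow> l j \<le> l i}"

lemma levels_finite: "finite (levels k H)"
proof -
  have "levels k H \<subseteq> {..<k} \<rightarrow>\<^sub>E {..H}" unfolding levels_def by blast
  moreover have "finite ({..<k} \<rightarrow>\<^sub>E {..H})" by (intro finite_PiE) auto
  ultimately show ?thesis by (rule finite_subset)
qed

lemma levels_sorted:
  assumes "l \<in> levels k H"
  shows "sorted (rev (map l [0..<k]))"
  unfolding sorted_iff_nth_mono
proof (intro allI impI)
  fix i j assume ij: "i \<le> j" "j < length (rev (map l [0..<k]))"
  hence jk: "j < k" by simp
  have "rev (map l [0..<k]) ! i = l (k - 1 - i)" using ij by (simp add: rev_nth)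
  moreover have "rev (map l [0..<k]) ! j = l (k - 1 - j)" using jk by (simp add: rev_nth)
  moreover have "l (k - 1 - i) \<le> l (k - 1 - j)"
    using assms ij jk unfolding levels_def by auto
  ultimately show "rev (map l [0..<k]) ! i \<le> rev (map l [0..<k]) ! j" by simp
qed

lemma levels_card: "real (card (levels k H)) \<le> real ((H + k) ^ k) / fact k"
proof -
  define f where "f l = mset (map l [0..<k])" for l :: "nat \<Rightarrow> nat"
  have inj: "inj_on f (levels k H)"
  proof (rule inj_onI)
    fix l l' assume l: "l \<in> levels k H" "l' \<in> levels k H" and e: "f l = f l'"
    have "mset (rev (map l [0..<k])) = mset (rev (map l' [0..<k]))" using e by (simp add: f_def)
    hence "sort (rev (map l' [0..<k])) = rev (map l [0..<k])"
      using levels_sorted[OF l(1)] by (intro properties_for_sort) auto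
    moreover have "sort (rev (map l' [0..<k])) = rev (map l' [0..<k])"
      using levels_sorted[OF l(2)] by (simp add: sorted_sort_id)
    ultimately have "map l [0..<k] = map l' [0..<k]" by simp
    hence "l i = l' i" if "i < k" for i
      using that by (metis add_0 diff_zero nth_map_upt)
    thus "l = l'" using l unfolding levels_def by (intro PiE_ext[of l "{..<k}" "\<lambda>_. {..H}"]) auto
  qed
  have sub: "f ` levels k H \<subseteq> multisets_of_size {..H} k"
    unfolding multisets_of_size_def f_def levels_def by (auto simp: PiE_iff)
  have "card (levels k H) = card (f ` levels k H)" using inj by (simp add: card_image)
  also have "\<dots> \<le> card (multisets_of_size {..H} k)"
    by (rule card_mono[OF _ sub]) auto
  also have "\<dots> = (H + k) choose k" by (simp add: card_multisets_of_size)
  finally have c: "card (levels k H) \<le> (H + k) choose k" .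
  have "real (card (levels k H)) * fact k \<le> real ((H + k) choose k) * fact k"
    using c by (intro mult_right_mono) auto
  also have "\<dots> = real (((H + k) choose k) * fact k)" by simp
  also have "\<dots> \<le> real ((H + k) ^ k)" by (subst of_nat_le_iff) (rule binomial_fact_pow)
  finally show ?thesis by (simp add: field_simps)
qed

definition latball :: "real \<Rightarrow> real \<Rightarrow> real \<Rightarrow> 'a::euclidean_space set" where
  "latball \<delta> a b = {w\<in>lat. a \<le> \<delta> * norm w \<and> \<delta> * norm w \<le> b}"

definition win :: "real \<Rightarrow> real \<Rightarrow> nat \<Rightarrow> ('a::euclidean_space \<times> 'a) set" where
  "win \<delta> h l = {(v, v'). v \<in> lat \<and> v' \<in> lat \<and>
      real l * h - 2 * real DIM('a) * \<delta> \<le> \<delta> * max (norm v) (norm v') \<and>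
      \<delta> * max (norm v) (norm v') \<le> (real l + 1) * h + 2 * real DIM('a) * \<delta>}"

definition paths :: "real \<Rightarrow> real \<Rightarrow> real \<Rightarrow> nat \<Rightarrow> (nat \<Rightarrow> nat) \<Rightarrow> (nat \<Rightarrow> 'a::euclidean_space) set" where
  "paths \<delta> h K k l = {z \<in> {..2 * k} \<rightarrow>\<^sub>E lat. z 0 \<in> latball \<delta> 0 (K + real DIM('a) * \<delta>) \<and>
      (\<forall>j<k. (z (2 * j + 1) - z (2 * j), z (2 * j + 2) - z (2 * j + 1)) \<in> win \<delta> h (l j))}"

lemma latball_finite:
  fixes \<delta> a b :: real
  assumes "\<delta> > 0" "0 \<le> b" "a \<le> b"
  shows "finite (latball \<delta> a b :: 'a::euclidean_space set)"
  using lat_count(1)[OF assms, where 'a='a] by (simp add: latball_def)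

lemma latball_card:
  fixes \<delta> a b :: real
  assumes "\<delta> > 0" "0 \<le> b" "a \<le> b"
  shows "card (latball \<delta> a b :: 'a::euclidean_space set) * \<delta> ^ DIM('a) \<le>
     measure lborel (ball (0::'a) 1) * ((b + DIM('a) * \<delta>) ^ DIM('a) - (max 0 (a - DIM('a) * \<delta>)) ^ DIM('a))"
  using lat_count(2)[OF assms, where 'a='a] by (simp add: latball_def)

lemma win_sub:
  fixes \<delta> h :: real and l :: nat
  assumes "\<delta> > 0"
  defines "a \<equiv> real l * h - 2 * real DIM('a) * \<delta>" and "b \<equiv> (real l + 1) * h + 2 * real DIM('a) * \<delta>"
  shows "(win \<delta> h l :: ('a::euclidean_space \<times> 'a) set) \<subseteq>
     (latball \<delta> a b \<times> latball \<delta> 0 b) \<union> (latball \<delta> 0 b \<times> latball \<delta> a b)"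
proof
  fix p :: "'a \<times> 'a" assume p: "p \<in> win \<delta> h l"
  obtain v v' where pv: "p = (v, v')" by (cases p)
  have v: "v \<in> lat" "v' \<in> lat" "a \<le> \<delta> * max (norm v) (norm v')" "\<delta> * max (norm v) (norm v') \<le> b"
    using p pv unfolding win_def a_def b_def by auto
  have n: "0 \<le> \<delta> * norm v" "0 \<le> \<delta> * norm v'" using assms by auto
  show "p \<in> (latball \<delta> a b \<times> latball \<delta> 0 b) \<union> (latball \<delta> 0 b \<times> latball \<delta> a b)"
  proof (cases "norm v' \<le> norm v")
    case True
    hence "\<delta> * norm v' \<le> \<delta> * norm v" using assms by (intro mult_left_mono) auto
    thus ?thesis using v n True unfolding pv latball_def by (auto simp: max_def)
  next
    case False
    hence "\<delta> * norm v \<le> \<delta> * norm v'" using assms by (intro mult_left_mono) auto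
    thus ?thesis using v n False unfolding pv latball_def by (auto simp: max_def)
  qed
qed

lemma win_card:
  fixes \<delta> h :: real and l :: nat
  assumes "\<delta> > 0" "h \<ge> 0"
  defines "a \<equiv> real l * h - 2 * real DIM('a) * \<delta>" and "b \<equiv> (real l + 1) * h + 2 * real DIM('a) * \<delta>"
  shows "finite (win \<delta> h l :: ('a::euclidean_space \<times> 'a) set)"
    "card (win \<delta> h l :: ('a::euclidean_space \<times> 'a) set) \<le>
       2 * card (latball \<delta> a b :: 'a set) * card (latball \<delta> 0 b :: 'a set)"
proof -
  have b0: "0 \<le> b" using assms by (simp add: b_def)
  have ab: "a \<le> b" using assms unfolding a_def b_def by (simp add: algebra_simps)
  have fa: "finite (latball \<delta> a b :: 'a set)" by (rule latball_finite[OF assms(1) b0 ab])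
  have fb: "finite (latball \<delta> 0 b :: 'a set)" by (rule latball_finite[OF assms(1) b0 b0])
  have sub: "(win \<delta> h l :: ('a \<times> 'a) set) \<subseteq>
     (latball \<delta> a b \<times> latball \<delta> 0 b) \<union> (latball \<delta> 0 b \<times> latball \<delta> a b)"
    unfolding a_def b_def by (rule win_sub[OF assms(1)])
  have fu: "finite ((latball \<delta> a b \<times> latball \<delta> 0 b) \<union> (latball \<delta> 0 b \<times> latball \<delta> a b) :: ('a \<times> 'a) set)"
    using fa fb by auto
  show "finite (win \<delta> h l :: ('a \<times> 'a) set)" by (rule finite_subset[OF sub fu])
  have "card (win \<delta> h l :: ('a \<times> 'a) set) \<le>
     card ((latball \<delta> a b \<times> latball \<delta> 0 b) \<union> (latball \<delta> 0 b \<times> latball \<delta> a b) :: ('a \<times> 'a) set)"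
    by (rule card_mono[OF fu sub])
  also have "\<dots> \<le> card (latball \<delta> a b \<times> latball \<delta> 0 b :: ('a \<times> 'a) set) + card (latball \<delta> 0 b \<times> latball \<delta> a b :: ('a \<times> 'a) set)"
    by (rule card_Un_le)
  also have "\<dots> = 2 * card (latball \<delta> a b :: 'a set) * card (latball \<delta> 0 b :: 'a set)"
    by (simp add: card_cartesian_product)
  finally show "card (win \<delta> h l :: ('a \<times> 'a) set) \<le> 2 * card (latball \<delta> a b :: 'a set) * card (latball \<delta> 0 b :: 'a set)" .
qed

lemma paths_card:
  fixes \<delta> h K :: real
  assumes "\<delta> > 0" "h \<ge> 0" "K \<ge> 0"
  shows "finite (paths \<delta> h K k l :: (nat \<Rightarrow> 'a::euclidean_space) set)"
    "card (paths \<delta> h K k l :: (nat \<Rightarrow> 'a::euclidean_space) set) \<le>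
       card (latball \<delta> 0 (K + real DIM('a) * \<delta>) :: 'a set) * (\<Prod>j<k. card (win \<delta> h (l j) :: ('a \<times> 'a) set))"
proof -
  define P where "P = (paths \<delta> h K k l :: (nat \<Rightarrow> 'a) set)"
  define St where "St = (latball \<delta> 0 (K + real DIM('a) * \<delta>) :: 'a set)"
  define T where "T = St \<times> (Pi\<^sub>E {..<k} (\<lambda>j. win \<delta> h (l j) :: ('a \<times> 'a) set))"
  define f where "f z = (z 0, restrict (\<lambda>j. (z (2 * j + 1) - z (2 * j), z (2 * j + 2) - z (2 * j + 1))) {..<k})"
    for z :: "nat \<Rightarrow> 'a"
  have fSt: "finite St" unfolding St_def using assms by (intro latball_finite) auto
  have fT: "finite T" unfolding T_def using fSt win_card(1)[OF assms(1,2)] by (intro finite_cartesian_product finite_PiE) auto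
  have img: "f ` P \<subseteq> T"
  proof
    fix y assume "y \<in> f ` P"
    then obtain z where z: "z \<in> P" and y: "y = f z" by blast
    have z0: "z 0 \<in> St" using z unfolding P_def paths_def St_def by blast
    have zj: "\<forall>j\<in>{..<k}. (z (2 * j + 1) - z (2 * j), z (2 * j + 2) - z (2 * j + 1)) \<in> win \<delta> h (l j)"
      using z unfolding P_def paths_def by blast
    have "restrict (\<lambda>j. (z (2 * j + 1) - z (2 * j), z (2 * j + 2) - z (2 * j + 1))) {..<k}
           \<in> Pi\<^sub>E {..<k} (\<lambda>j. win \<delta> h (l j) :: ('a \<times> 'a) set)"
      using zj by (simp only: restrict_PiE_iff)
    thus "y \<in> T" unfolding y f_def T_def using z0 by (simp only: mem_Times_iff fst_conv snd_conv)
  qed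
  have inj: "inj_on f P"
  proof (rule inj_onI)
    fix z z' assume z: "z \<in> P" "z' \<in> P" and e: "f z = f z'"
    have e0: "z 0 = z' 0" using e by (simp add: f_def)
    have ej: "z (2 * j + 1) - z (2 * j) = z' (2 * j + 1) - z' (2 * j) \<and>
              z (2 * j + 2) - z (2 * j + 1) = z' (2 * j + 2) - z' (2 * j + 1)" if "j < k" for j
    proof -
      have "restrict (\<lambda>j. (z (2 * j + 1) - z (2 * j), z (2 * j + 2) - z (2 * j + 1))) {..<k} j =
            restrict (\<lambda>j. (z' (2 * j + 1) - z' (2 * j), z' (2 * j + 2) - z' (2 * j + 1))) {..<k} j"
        using e by (simp add: f_def)
      thus ?thesis using that by simp
    qed
    have "i \<le> 2 * k \<longrightarrow> z i = z' i" for i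
    proof (induction i)
      case 0 thus ?case using e0 by simp
    next
      case (Suc i)
      show ?case
      proof
        assume i: "Suc i \<le> 2 * k"
        have zi: "z i = z' i" using Suc i by simp
        show "z (Suc i) = z' (Suc i)"
        proof (cases "even i")
          case True
          then obtain j where j: "i = 2 * j" by blast
          hence "j < k" using i by simp
          hence "z (2 * j + 1) - z (2 * j) = z' (2 * j + 1) - z' (2 * j)" using ej by blast
          thus ?thesis using zi j by (simp add: algebra_simps)
        next
          case False
          then obtain j where j: "i = 2 * j + 1" using oddE by blast
          hence "j < k" using i by simp
          hence "z (2 * j + 2) - z (2 * j + 1) = z' (2 * j + 2) - z' (2 * j + 1)" using ej by blast
          moreover have "Suc i = 2 * j + 2" using j by simp
          ultimately show ?thesis using zi j by (simp add: algebra_simps)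
        qed
      qed
    qed
    thus "z = z'" using z unfolding P_def paths_def
      by (intro PiE_ext[of z "{..2 * k}" "\<lambda>_. lat"]) auto
  qed
  have fP: "finite P" using finite_imageD[OF finite_subset[OF img fT] inj] .
  thus "finite (paths \<delta> h K k l :: (nat \<Rightarrow> 'a) set)" by (simp add: P_def)
  have "card P = card (f ` P)" using inj by (simp add: card_image)
  also have "\<dots> \<le> card T" by (rule card_mono[OF fT img])
  also have "\<dots> = card St * (\<Prod>j<k. card (win \<delta> h (l j) :: ('a \<times> 'a) set))"
    unfolding T_def by (simp add: card_cartesian_product card_PiE)
  finally show "card (paths \<delta> h K k l :: (nat \<Rightarrow> 'a) set) \<le>
       card (latball \<delta> 0 (K + real DIM('a) * \<delta>) :: 'a set) * (\<Prod>j<k. card (win \<delta> h (l j) :: ('a \<times> 'a) set))"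
    by (simp add: P_def St_def)
qed

lemma kap_nonneg: "0 \<le> measure lborel (ball (0::'a::euclidean_space) 1)"
  by simp

lemma ball_bound:
  fixes \<delta> \<rho> :: real
  assumes "\<delta> > 0" "\<rho> \<ge> 0"
  shows "card (latball \<delta> 0 \<rho> :: 'a::euclidean_space set) * \<delta> ^ DIM('a) \<le>
     measure lborel (ball (0::'a) 1) * (\<rho> + DIM('a) * \<delta>) ^ DIM('a)"
proof -
  have "max 0 (0 - real DIM('a) * \<delta>) = 0" using assms by simp
  thus ?thesis using latball_card[OF assms(1,2,2), where 'a='a] by (simp add: zero_power[OF DIM_positive])
qed

lemma ball_bound':
  fixes \<delta> \<rho> C :: real
  assumes "\<delta> > 0" "\<rho> \<ge> 0" "\<rho> + DIM('a) * \<delta> \<le> C"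
  shows "card (latball \<delta> 0 \<rho> :: 'a::euclidean_space set) * \<delta> ^ DIM('a) \<le>
     measure lborel (ball (0::'a) 1) * C ^ DIM('a)"
proof -
  have "(\<rho> + DIM('a) * \<delta>) ^ DIM('a) \<le> C ^ DIM('a)"
    using assms by (intro power_mono) auto
  hence "measure lborel (ball (0::'a) 1) * (\<rho> + DIM('a) * \<delta>) ^ DIM('a) \<le> measure lborel (ball (0::'a) 1) * C ^ DIM('a)"
    by (intro mult_left_mono) auto
  thus ?thesis using ball_bound[OF assms(1,2), where 'a='a] by linarith
qed

lemma win_bound:
  fixes \<delta> h R :: real and H l :: nat
  assumes d: "\<delta> > 0" and R: "R > 0" and H: "H \<ge> 1" and h: "h = R / H" and l: "l \<le> H"
    and small: "6 * DIM('a) * \<delta> \<le> h"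
  shows "card (win \<delta> h l :: ('a::euclidean_space \<times> 'a) set) * \<delta> ^ (2 * DIM('a)) \<le>
     4 * measure lborel (ball (0::'a) 1) ^ 2 * DIM('a) * (3 * R) ^ (2 * DIM('a)) / H"
proof -
  define n where "n = DIM('a)"
  define \<kappa> where "\<kappa> = measure lborel (ball (0::'a) 1)"
  define a where "a = real l * h - 2 * real n * \<delta>"
  define b where "b = (real l + 1) * h + 2 * real n * \<delta>"
  define Bb where "Bb = b + n * \<delta>"
  define Aa where "Aa = max 0 (a - n * \<delta>)"
  have n1: "n \<ge> 1" unfolding n_def using DIM_positive[where 'a='a] by linarith
  have k0: "\<kappa> \<ge> 0" unfolding \<kappa>_def by simp
  have h0: "h > 0" using R H h by simp
  have nd: "0 \<le> real n * \<delta>" using d by simp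
  have hR: "h \<le> R" using R H h by (simp add: divide_le_eq)
  have HhR: "real H * h = R" using H h by simp
  have "0 \<le> (real l + 1) * h" using h0 by simp
  hence b0: "0 \<le> b" using nd unfolding b_def by linarith
  have ab: "a \<le> b" using h0 nd by (simp add: a_def b_def algebra_simps)
  have A0: "0 \<le> Aa" by (simp add: Aa_def)
  have AB: "Aa \<le> Bb" using ab nd b0 unfolding Aa_def Bb_def max_def by (auto simp: mult.commute)
  have lh: "real l * h \<le> R" using l h0 HhR by (metis mult_right_mono of_nat_le_iff less_imp_le)
  have Bb3: "Bb \<le> 3 * R" using lh hR small nd unfolding Bb_def b_def n_def by (simp add: algebra_simps)
  have BA: "Bb - Aa \<le> 2 * h"
  proof -
    have "Bb - (a - n * \<delta>) \<le> 2 * h" using small unfolding Bb_def a_def b_def n_def by (simp add: algebra_simps)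
    moreover have "Aa \<ge> a - n * \<delta>" by (simp add: Aa_def)
    ultimately show ?thesis by linarith
  qed
  define cA where "cA = real (card (latball \<delta> a b :: 'a set))"
  define cB where "cB = real (card (latball \<delta> 0 b :: 'a set))"
  have cA0: "cA \<ge> 0" "cB \<ge> 0" by (simp_all add: cA_def cB_def)
  have cA: "cA * \<delta> ^ n \<le> \<kappa> * (Bb ^ n - Aa ^ n)"
    using latball_card[OF d b0 ab, where 'a='a] unfolding cA_def \<kappa>_def Bb_def Aa_def n_def by simp
  also have "\<dots> \<le> \<kappa> * (n * Bb ^ (n - 1) * (Bb - Aa))"
    using pow_diff_le[OF A0 AB, of n] k0 by (intro mult_left_mono) auto
  also have "\<dots> \<le> \<kappa> * (n * (3 * R) ^ (n - 1) * (2 * h))"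
  proof -
    have "Bb ^ (n - 1) \<le> (3 * R) ^ (n - 1)" using Bb3 A0 AB by (intro power_mono) auto
    moreover have "0 \<le> Bb - Aa" using AB by simp
    ultimately have "Bb ^ (n - 1) * (Bb - Aa) \<le> (3 * R) ^ (n - 1) * (2 * h)"
      using BA R by (intro mult_mono) auto
    hence "n * (Bb ^ (n - 1) * (Bb - Aa)) \<le> n * ((3 * R) ^ (n - 1) * (2 * h))"
      by (intro mult_left_mono) auto
    thus ?thesis using k0 by (intro mult_left_mono) (auto simp: mult.assoc)
  qed
  finally have cAb: "cA * \<delta> ^ n \<le> \<kappa> * (n * (3 * R) ^ (n - 1) * (2 * h))" .
  have "cB * \<delta> ^ n \<le> \<kappa> * (Bb ^ n - 0 ^ n)"
  proof -
    have "max 0 (0 - real n * \<delta>) = 0" using nd by simp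
    thus ?thesis using latball_card[OF d b0 b0, where 'a='a] unfolding cB_def \<kappa>_def Bb_def n_def by (simp add: zero_power[OF DIM_positive])
  qed
  also have "\<dots> \<le> \<kappa> * (3 * R) ^ n"
  proof -
    have "Bb ^ n \<le> (3 * R) ^ n" using A0 AB Bb3 by (intro power_mono) auto
    moreover have np: "0 < n" using n1 by simp
    ultimately show ?thesis using k0 by (intro mult_left_mono) (auto simp: zero_power[OF np])
  qed
  finally have cBb: "cB * \<delta> ^ n \<le> \<kappa> * (3 * R) ^ n" .
  have cw: "card (win \<delta> h l :: ('a \<times> 'a) set) \<le> 2 * card (latball \<delta> a b :: 'a set) * card (latball \<delta> 0 b :: 'a set)"
    unfolding a_def b_def n_def by (rule win_card(2)[OF d less_imp_le[OF h0]])
  have "real (card (win \<delta> h l :: ('a \<times> 'a) set)) \<le> real (2 * card (latball \<delta> a b :: 'a set) * card (latball \<delta> 0 b :: 'a set))"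
    using cw by (simp only: of_nat_le_iff)
  hence "real (card (win \<delta> h l :: ('a \<times> 'a) set)) \<le> 2 * cA * cB"
    unfolding cA_def cB_def by simp
  hence "real (card (win \<delta> h l :: ('a \<times> 'a) set)) * \<delta> ^ (2 * n) \<le> 2 * cA * cB * \<delta> ^ (2 * n)"
    using d by (intro mult_right_mono) auto
  also have "\<dots> = 2 * (cA * \<delta> ^ n) * (cB * \<delta> ^ n)"
  proof -
    have e: "\<delta> ^ (2 * n) = \<delta> ^ n * \<delta> ^ n" by (simp add: mult_2 power_add)
    show ?thesis unfolding e by (simp only: mult_ac)
  qed
  also have "\<dots> \<le> 2 * (\<kappa> * (n * (3 * R) ^ (n - 1) * (2 * h))) * (\<kappa> * (3 * R) ^ n)"
  proof -
    have "(cA * \<delta> ^ n) * (cB * \<delta> ^ n) \<le> (\<kappa> * (n * (3 * R) ^ (n - 1) * (2 * h))) * (\<kappa> * (3 * R) ^ n)"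
    proof (rule mult_mono[OF cAb cBb])
      show "0 \<le> \<kappa> * (n * (3 * R) ^ (n - 1) * (2 * h))" using k0 R h0 by simp
      show "0 \<le> cB * \<delta> ^ n" using cA0 d by simp
    qed
    hence "2 * ((cA * \<delta> ^ n) * (cB * \<delta> ^ n)) \<le> 2 * ((\<kappa> * (n * (3 * R) ^ (n - 1) * (2 * h))) * (\<kappa> * (3 * R) ^ n))"
      by (rule mult_left_mono) simp
    thus ?thesis by (simp only: mult.assoc)
  qed
  also have "\<dots> = 4 * \<kappa>^2 * n * ((3 * R) ^ (n - 1) * h) * (3 * R) ^ n"
    by (simp add: power2_eq_square mult_ac)
  also have "(3 * R) ^ (n - 1) * h = (3 * R) ^ (n - 1) * R / H" using h by simp
  also have "\<dots> \<le> (3 * R) ^ (n - 1) * (3 * R) / H"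
    using R H by (intro divide_right_mono mult_left_mono) auto
  also have "(3 * R) ^ (n - 1) * (3 * R) = (3 * R) ^ n" using n1 by (metis power_minus_mult less_le_trans zero_less_one)
  finally have "real (card (win \<delta> h l :: ('a \<times> 'a) set)) * \<delta> ^ (2 * n) \<le> 4 * \<kappa>^2 * n * ((3 * R) ^ n / H) * (3 * R) ^ n"
    using k0 R by (simp add: mult_left_mono mult_right_mono)
  also have "\<dots> = 4 * \<kappa>^2 * n * (3 * R) ^ (2 * n) / H" by (simp add: power_mult power2_eq_square mult_2 power_add)
  finally show ?thesis unfolding \<kappa>_def n_def .
qed

lemma ppp_def_parts:
  assumes "homogeneous_PPP M lam Phi"
  shows "prob_space M" "lam > 0"
    "\<forall>\<omega>\<in>space M. \<forall>B. bounded B \<longrightarrow> finite (Phi \<omega> \<inter> B)"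
    "\<forall>B. B \<in> sets lborel \<and> bounded B \<longrightarrow>
        (\<lambda>\<omega>. card (Phi \<omega> \<inter> B)) \<in> measurable M (count_space UNIV) \<and>
        (\<forall>k::nat. measure M {\<omega>\<in>space M. card (Phi \<omega> \<inter> B) = k} =
            (lam * measure lborel B) ^ k / fact k * exp (- (lam * measure lborel B)))"
    "\<forall>(I::nat set) (B::nat \<Rightarrow> 'a::euclidean_space set). finite I \<and> (\<forall>i\<in>I. B i \<in> sets lborel \<and> bounded (B i))
        \<and> disjoint_family_on B I \<longrightarrow>
        prob_space.indep_vars M (\<lambda>_. count_space UNIV) (\<lambda>i \<omega>. card (Phi \<omega> \<inter> B i)) I"
  using assms unfolding homogeneous_PPP_def
  apply -
  apply (elim conjE, assumption)
  apply (elim conjE, assumption)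
  apply (elim conjE, assumption)
  apply (elim conjE, assumption)
  apply (elim conjE, assumption)
  done

lemma ppp_prob_space: "homogeneous_PPP M lam Phi \<Longrightarrow> prob_space M"
  by (rule ppp_def_parts(1))

lemma ppp_lam: "homogeneous_PPP M lam Phi \<Longrightarrow> lam > 0"
  by (rule ppp_def_parts(2))

lemma ppp_finite: "homogeneous_PPP M lam Phi \<Longrightarrow> \<omega> \<in> space M \<Longrightarrow> bounded B \<Longrightarrow> finite (Phi \<omega> \<inter> B)"
proof -
  assume a: "homogeneous_PPP M lam Phi" "\<omega> \<in> space M" "bounded B"
  have "\<forall>\<omega>\<in>space M. \<forall>B. bounded B \<longrightarrow> finite (Phi \<omega> \<inter> B)" by (rule ppp_def_parts(3)[OF a(1)])
  thus ?thesis using a(2,3) by blast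
qed

lemma ppp_meas:
  assumes "homogeneous_PPP M lam Phi" "B \<in> sets lborel" "bounded B"
  shows "(\<lambda>\<omega>. card (Phi \<omega> \<inter> B)) \<in> measurable M (count_space UNIV)"
  using ppp_def_parts(4)[OF assms(1)] assms(2,3) by blast

lemma ppp_dist:
  assumes "homogeneous_PPP M lam Phi" "B \<in> sets lborel" "bounded B"
  shows "measure M {\<omega>\<in>space M. card (Phi \<omega> \<inter> B) = k} =
            (lam * measure lborel B) ^ k / fact k * exp (- (lam * measure lborel B))"
  using ppp_def_parts(4)[OF assms(1)] assms(2,3) by blast

lemma ppp_ev_sets:
  assumes "homogeneous_PPP M lam Phi" "B \<in> sets lborel" "bounded B"
  shows "{\<omega>\<in>space M. Q (card (Phi \<omega> \<inter> B))} \<in> sets M"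
proof -
  have "(\<lambda>\<omega>. card (Phi \<omega> \<inter> B)) -` {n. Q n} \<inter> space M \<in> sets M"
    by (rule measurable_sets[OF ppp_meas[OF assms]]) simp
  moreover have "(\<lambda>\<omega>. card (Phi \<omega> \<inter> B)) -` {n. Q n} \<inter> space M = {\<omega>\<in>space M. Q (card (Phi \<omega> \<inter> B))}"
    by auto
  ultimately show ?thesis by simp
qed

lemma ppp_ge1:
  assumes H: "homogeneous_PPP M lam Phi" and B: "B \<in> sets lborel" "bounded B"
  shows "measure M {\<omega>\<in>space M. 1 \<le> card (Phi \<omega> \<inter> B)} \<le> lam * measure lborel B"
proof -
  interpret prob_space M using ppp_prob_space[OF H] .
  define \<mu> where "\<mu> = lam * measure lborel B"
  have "{\<omega>\<in>space M. 1 \<le> card (Phi \<omega> \<inter> B)} = space M - {\<omega>\<in>space M. card (Phi \<omega> \<inter> B) = 0}"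
    by auto
  hence "measure M {\<omega>\<in>space M. 1 \<le> card (Phi \<omega> \<inter> B)} = 1 - measure M {\<omega>\<in>space M. card (Phi \<omega> \<inter> B) = 0}"
    using prob_compl[OF ppp_ev_sets[OF H B, of "\<lambda>n. n = 0"]] by simp
  also have "\<dots> = 1 - exp (- \<mu>)" using ppp_dist[OF H B, of 0] by (simp add: \<mu>_def)
  also have "\<dots> \<le> \<mu>" using exp_ge_add_one_self[of "- \<mu>"] by simp
  finally show ?thesis by (simp add: \<mu>_def)
qed

lemma ppp_ge2:
  assumes H: "homogeneous_PPP M lam Phi" and B: "B \<in> sets lborel" "bounded B"
  shows "measure M {\<omega>\<in>space M. 2 \<le> card (Phi \<omega> \<inter> B)} \<le> (lam * measure lborel B) ^ 2"
proof -
  interpret prob_space M using ppp_prob_space[OF H] .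
  define \<mu> where "\<mu> = lam * measure lborel B"
  have mu0: "\<mu> \<ge> 0" using ppp_lam[OF H] by (simp add: \<mu>_def)
  define E0 where "E0 = {\<omega>\<in>space M. card (Phi \<omega> \<inter> B) = 0}"
  define E1 where "E1 = {\<omega>\<in>space M. card (Phi \<omega> \<inter> B) = 1}"
  have s0: "E0 \<in> sets M" unfolding E0_def by (rule ppp_ev_sets[OF H B])
  have s1: "E1 \<in> sets M" unfolding E1_def by (rule ppp_ev_sets[OF H B])
  have "{\<omega>\<in>space M. 2 \<le> card (Phi \<omega> \<inter> B)} = space M - (E0 \<union> E1)"
    by (auto simp: E0_def E1_def)
  hence "measure M {\<omega>\<in>space M. 2 \<le> card (Phi \<omega> \<inter> B)} = 1 - measure M (E0 \<union> E1)"
    using prob_compl[of "E0 \<union> E1"] s0 s1 by simp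
  also have "measure M (E0 \<union> E1) = measure M E0 + measure M E1"
    using s0 s1 by (intro finite_measure_Union) (auto simp: E0_def E1_def)
  also have "measure M E0 = exp (- \<mu>)" using ppp_dist[OF H B, of 0] by (simp add: \<mu>_def E0_def)
  also have "measure M E1 = \<mu> * exp (- \<mu>)" using ppp_dist[OF H B, of 1] by (simp add: \<mu>_def E1_def)
  also have "1 - (exp (- \<mu>) + \<mu> * exp (- \<mu>)) \<le> \<mu> ^ 2"
  proof -
    have "1 - \<mu> \<le> exp (- \<mu>)" using exp_ge_add_one_self[of "- \<mu>"] by simp
    hence "(1 + \<mu>) * (1 - \<mu>) \<le> (1 + \<mu>) * exp (- \<mu>)" using mu0 by (intro mult_left_mono) auto
    thus ?thesis by (simp add: algebra_simps power2_eq_square)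
  qed
  finally show ?thesis by (simp add: \<mu>_def)
qed

lemma ppp_indep:
  fixes B :: "nat \<Rightarrow> 'a::euclidean_space set"
  assumes H: "homogeneous_PPP M lam Phi" and I: "finite I" "I \<noteq> {}"
    and B: "\<And>i. i \<in> I \<Longrightarrow> B i \<in> sets lborel \<and> bounded (B i)" and dj: "disjoint_family_on B I"
  shows "measure M (\<Inter>i\<in>I. {\<omega>\<in>space M. 1 \<le> card (Phi \<omega> \<inter> B i)}) =
         (\<Prod>i\<in>I. measure M {\<omega>\<in>space M. 1 \<le> card (Phi \<omega> \<inter> B i)})"
proof -
  interpret prob_space M using ppp_prob_space[OF H] .
  have "indep_vars (\<lambda>_. count_space UNIV) (\<lambda>i \<omega>. card (Phi \<omega> \<inter> B i)) I"
  proof -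
    have pre: "finite I \<and> (\<forall>i\<in>I. B i \<in> sets lborel \<and> bounded (B i)) \<and> disjoint_family_on B I"
      using I B dj by blast
    show ?thesis by (rule ppp_def_parts(5)[OF H, THEN spec[where x=I], THEN spec[where x=B], THEN mp, OF pre])
  qed
  hence ind: "indep_sets (\<lambda>i. {(\<lambda>\<omega>. card (Phi \<omega> \<inter> B i)) -` A \<inter> space M | A. A \<in> sets (count_space UNIV)}) I"
    unfolding indep_vars_def2 by (rule conjunct2)
  have eq: "{\<omega>\<in>space M. 1 \<le> card (Phi \<omega> \<inter> B i)} = (\<lambda>\<omega>. card (Phi \<omega> \<inter> B i)) -` {n. 1 \<le> n} \<inter> space M" for i
    by auto
  have mem: "\<forall>j\<in>I. (\<lambda>\<omega>. card (Phi \<omega> \<inter> B j)) -` {n. 1 \<le> n} \<inter> space M \<in>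
      {(\<lambda>\<omega>. card (Phi \<omega> \<inter> B j)) -` A \<inter> space M | A. A \<in> sets (count_space UNIV)}"
    by (intro ballI CollectI exI[of _ "{n. 1 \<le> n}"] conjI refl) simp
  show ?thesis unfolding eq
    by (rule indep_setsD[OF ind subset_refl I(2) I(1) mem])
qed

definition dd :: "(nat \<Rightarrow> 'a::real_normed_vector) \<Rightarrow> nat \<Rightarrow> real" where
  "dd x i = norm (x (Suc i) - x i)"

definition Mx :: "(nat \<Rightarrow> 'a::real_normed_vector) \<Rightarrow> nat \<Rightarrow> real" where
  "Mx x j = max (dd x (2 * j)) (dd x (2 * j + 1))"

lemma chain_step:
  assumes "second_order_descending_chain S x" "i \<ge> 2"
  shows "dd x i < max (dd x (i - 1)) (dd x (i - 2))"
proof -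
  have "norm (x (Suc i) - x i) < max (norm (x i - x (i - 1))) (norm (x (i - 1) - x (i - 2)))"
    using assms unfolding second_order_descending_chain_def by blast
  moreover have "Suc (i - 1) = i" "Suc (i - 2) = i - 1" using assms(2) by auto
  ultimately show ?thesis unfolding dd_def by metis
qed

lemma Mx_dec:
  assumes "second_order_descending_chain S x"
  shows "Mx x (Suc j) < Mx x j"
proof -
  have a: "dd x (2 * j + 2) < max (dd x (2 * j + 1)) (dd x (2 * j))"
    using chain_step[OF assms, of "2 * j + 2"] by simp
  have b: "dd x (2 * j + 3) < max (dd x (2 * j + 2)) (dd x (2 * j + 1))"
    using chain_step[OF assms, of "2 * j + 3"] by simp
  have e1: "Mx x (Suc j) = max (dd x (2 * j + 2)) (dd x (2 * j + 3))"
    unfolding Mx_def by (simp add: numeral_eq_Suc)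
  have e2: "Mx x j = max (dd x (2 * j)) (dd x (2 * j + 1))" unfolding Mx_def by simp
  show ?thesis unfolding e1 e2 using a b by linarith
qed

lemma Mx_mono:
  assumes "second_order_descending_chain S x" "i \<le> j"
  shows "Mx x j \<le> Mx x i"
  using assms(2)
proof (induction j rule: dec_induct)
  case base thus ?case by simp
next
  case (step j) thus ?case using Mx_dec[OF assms(1), of j] by simp
qed

lemma dd_le:
  assumes "second_order_descending_chain S x"
  shows "dd x i \<le> Mx x 0"
proof -
  have "dd x i \<le> Mx x (i div 2)"
  proof (cases "even i")
    case True
    hence "i = 2 * (i div 2)" by simp
    thus ?thesis unfolding Mx_def by (metis max.cobounded1)
  next
    case False
    hence "i = 2 * (i div 2) + 1" by presburger
    thus ?thesis unfolding Mx_def by (metis max.cobounded2)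
  qed
  also have "\<dots> \<le> Mx x 0" by (rule Mx_mono[OF assms]) simp
  finally show ?thesis .
qed

lemma x_norm:
  assumes "second_order_descending_chain S x"
  shows "norm (x i) \<le> norm (x 0) + i * Mx x 0"
proof (induction i)
  case 0 thus ?case by simp
next
  case (Suc i)
  have "norm (x (Suc i)) \<le> norm (x i) + dd x i"
    unfolding dd_def by (metis add.commute diff_add_cancel norm_triangle_ineq)
  also have "\<dots> \<le> norm (x 0) + i * Mx x 0 + Mx x 0" using Suc dd_le[OF assms, of i] by simp
  finally show ?case by (simp add: algebra_simps)
qed

lemma chain_inS: "second_order_descending_chain S x \<Longrightarrow> x i \<in> S"
  unfolding second_order_descending_chain_def by blast

lemma chain_inj: "second_order_descending_chain S x \<Longrightarrow> inj x"
  unfolding second_order_descending_chain_def by blast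

definition ev1 :: "'w measure \<Rightarrow> ('w \<Rightarrow> 'a::euclidean_space set) \<Rightarrow> real \<Rightarrow> nat \<Rightarrow> (nat \<Rightarrow> 'a) \<Rightarrow> 'w set" where
  "ev1 M Phi \<delta> k z = (\<Inter>i\<in>{..2 * k}. {\<omega>\<in>space M. 1 \<le> card (Phi \<omega> \<inter> cube \<delta> (z i))})"

definition badev :: "'w measure \<Rightarrow> ('w \<Rightarrow> 'a::euclidean_space set) \<Rightarrow> real \<Rightarrow> real \<Rightarrow> 'w set" where
  "badev M Phi \<delta> \<rho> = (\<Union>w\<in>(latball \<delta> 0 \<rho> :: 'a set). {\<omega>\<in>space M. 2 \<le> card (Phi \<omega> \<inter> cube \<delta> w)})"

definition GG :: "'w measure \<Rightarrow> ('w \<Rightarrow> 'a::euclidean_space set) \<Rightarrow> real \<Rightarrow> real \<Rightarrow> real \<Rightarrow> nat \<Rightarrow> nat \<Rightarrow> real \<Rightarrow> 'w set" where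
  "GG M Phi \<delta> h K k H \<rho> = badev M Phi \<delta> \<rho> \<union>
     (\<Union>l\<in>levels k H. \<Union>z\<in>{z\<in>(paths \<delta> h K k l :: (nat \<Rightarrow> 'a) set). inj_on z {..2 * k}}. ev1 M Phi \<delta> k z)"

lemma lat_diff: "v \<in> lat \<Longrightarrow> w \<in> lat \<Longrightarrow> v - w \<in> lat"
  unfolding lat_def by (simp add: inner_diff_left Ints_diff)

lemma q_dist:
  fixes y y' :: "'a::euclidean_space" and \<delta> :: real
  assumes "\<delta> > 0"
  shows "\<bar>\<delta> * norm (qi \<delta> y' - qi \<delta> y) - norm (y' - y)\<bar> \<le> 2 * DIM('a) * \<delta>"
proof -
  have e: "\<delta> * norm (qi \<delta> y' - qi \<delta> y) = norm (\<delta> *\<^sub>R qi \<delta> y' - \<delta> *\<^sub>R qi \<delta> y)"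
    using assms by (simp add: scaleR_diff_right[symmetric])
  have "\<bar>norm (\<delta> *\<^sub>R qi \<delta> y' - \<delta> *\<^sub>R qi \<delta> y) - norm (y' - y)\<bar> \<le>
        norm ((\<delta> *\<^sub>R qi \<delta> y' - \<delta> *\<^sub>R qi \<delta> y) - (y' - y))"
    by (rule norm_triangle_ineq3)
  also have "(\<delta> *\<^sub>R qi \<delta> y' - \<delta> *\<^sub>R qi \<delta> y) - (y' - y) = (y - \<delta> *\<^sub>R qi \<delta> y) - (y' - \<delta> *\<^sub>R qi \<delta> y')"
    by (simp add: algebra_simps)
  also have "norm \<dots> \<le> norm (y - \<delta> *\<^sub>R qi \<delta> y) + norm (y' - \<delta> *\<^sub>R qi \<delta> y')"
    by (rule norm_triangle_ineq4)
  also have "\<dots> \<le> DIM('a) * \<delta> + DIM('a) * \<delta>"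
    using qi_approx[OF assms, of y] qi_approx[OF assms, of y'] by (intro add_mono) auto
  finally show ?thesis unfolding e by (simp add: mult.commute mult.left_commute)
qed

lemma max_close:
  fixes a b c d e :: real
  assumes "\<bar>a - c\<bar> \<le> e" "\<bar>b - d\<bar> \<le> e"
  shows "max c d - e \<le> max a b \<and> max a b \<le> max c d + e"
  using assms by (auto simp: max_def abs_le_iff)

lemma chain_in_GG:
  fixes Phi :: "'w \<Rightarrow> 'a::euclidean_space set" and \<delta> h R K :: real and k H :: nat
  assumes Hp: "homogeneous_PPP M lam Phi" and \<omega>: "\<omega> \<in> space M"
    and ch: "second_order_descending_chain (Phi \<omega>) x"
    and K: "norm (x 0) \<le> K" and R: "Mx x 0 \<le> R" "R > 0"
    and d: "\<delta> > 0" and H: "H \<ge> 1" and h: "h = R / H"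
    and rho: "\<rho> = K + 2 * k * R + DIM('a) * \<delta>"
  shows "\<omega> \<in> GG M Phi \<delta> h K k H \<rho>"
proof -
  have h0: "h > 0" using R H h by simp
  have xn: "norm (x i) \<le> K + i * R" for i
  proof -
    have "real i * Mx x 0 \<le> real i * R" using R by (intro mult_left_mono) auto
    thus ?thesis using x_norm[OF ch, of i] K by linarith
  qed
  have qn: "\<delta> * norm (qi \<delta> y) \<le> norm y + DIM('a) * \<delta>" for y :: 'a
  proof -
    have "\<delta> * norm (qi \<delta> y) = norm (\<delta> *\<^sub>R qi \<delta> y)" using d by simp
    also have "\<dots> \<le> norm y + norm (y - \<delta> *\<^sub>R qi \<delta> y)"
      by (metis add.commute diff_add_cancel norm_triangle_ineq norm_minus_commute)
    finally show ?thesis using qi_approx[OF d, of y] by linarith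
  qed
  have fin: "finite (Phi \<omega> \<inter> cube \<delta> w)" for w
    by (rule ppp_finite[OF Hp \<omega> cube_bounded[OF d]])
  define z where "z = restrict (\<lambda>i. qi \<delta> (x i)) {..2 * k}"
  show ?thesis
  proof (cases "inj_on z {..2 * k}")
    case True
    define l where "l = restrict (\<lambda>j. nat \<lfloor>Mx x j / h\<rfloor>) {..<k}"
    have Mx0: "0 \<le> Mx x j" for j unfolding Mx_def dd_def by (simp add: le_max_iff_disj)
    have lb: "real (l j) * h \<le> Mx x j \<and> Mx x j < (real (l j) + 1) * h" if "j < k" for j
    proof -
      have f0: "0 \<le> \<lfloor>Mx x j / h\<rfloor>" using Mx0 h0 by simp
      have lj: "real (l j) = of_int \<lfloor>Mx x j / h\<rfloor>" using that f0 by (simp add: l_def)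
      show ?thesis unfolding lj using floor_bounds[OF h0, of "Mx x j"] by (simp add: algebra_simps)
    qed
    have lev: "l \<in> levels k H"
      unfolding levels_def
    proof (intro CollectI conjI allI impI)
      show "l \<in> {..<k} \<rightarrow>\<^sub>E {..H}"
      proof (rule PiE_I)
        fix j assume j: "j \<in> {..<k}"
        have "Mx x j \<le> R" using Mx_mono[OF ch, of 0 j] R by simp
        hence "Mx x j / h \<le> R / h" using h0 by (simp add: divide_right_mono)
        moreover have "R / h = H" using h H R(2) by simp
        ultimately have "Mx x j / h \<le> H" by simp
        hence "\<lfloor>Mx x j / h\<rfloor> \<le> int H" by (simp add: floor_le_iff)
        thus "l j \<in> {..H}" using j by (simp add: l_def)
      next
        fix j assume "j \<notin> {..<k}" thus "l j = undefined" by (simp add: l_def)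
      qed
    next
      fix i j assume ij: "i \<le> j" "j < k"
      have "Mx x j / h \<le> Mx x i / h" using Mx_mono[OF ch ij(1)] h0 by (simp add: divide_right_mono)
      hence "\<lfloor>Mx x j / h\<rfloor> \<le> \<lfloor>Mx x i / h\<rfloor>" by (rule floor_mono)
      thus "l j \<le> l i" using ij by (simp add: l_def nat_mono)
    qed
    have zp: "z \<in> paths \<delta> h K k l"
      unfolding paths_def
    proof (intro CollectI conjI allI impI)
      show "z \<in> {..2 * k} \<rightarrow>\<^sub>E lat" unfolding z_def using qi_lat by auto
      show "z 0 \<in> latball \<delta> 0 (K + real DIM('a) * \<delta>)"
        unfolding latball_def z_def using qi_lat qn[of "x 0"] K d by auto
    next
      fix j assume j: "j < k"
      define v where "v = qi \<delta> (x (2 * j + 1)) - qi \<delta> (x (2 * j))"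
      define v' where "v' = qi \<delta> (x (2 * j + 2)) - qi \<delta> (x (2 * j + 1))"
      have zv: "(z (2 * j + 1) - z (2 * j), z (2 * j + 2) - z (2 * j + 1)) = (v, v')"
        using j by (simp add: z_def v_def v'_def)
      have c1: "\<bar>\<delta> * norm v - dd x (2 * j)\<bar> \<le> 2 * DIM('a) * \<delta>"
        unfolding v_def dd_def using q_dist[OF d] by simp
      have c2: "\<bar>\<delta> * norm v' - dd x (2 * j + 1)\<bar> \<le> 2 * DIM('a) * \<delta>"
      proof -
        have "Suc (2 * j + 1) = 2 * j + 2" by simp
        thus ?thesis unfolding v'_def dd_def using q_dist[OF d, of "x (2 * j + 2)" "x (2 * j + 1)"] by simp
      qed
      have mc: "Mx x j - 2 * DIM('a) * \<delta> \<le> max (\<delta> * norm v) (\<delta> * norm v') \<and>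
                max (\<delta> * norm v) (\<delta> * norm v') \<le> Mx x j + 2 * DIM('a) * \<delta>"
        unfolding Mx_def using max_close[OF c1 c2] by simp
      have mm: "\<delta> * max (norm v) (norm v') = max (\<delta> * norm v) (\<delta> * norm v')"
        using d by (simp add: max_mult_distrib_left)
      have vl: "v \<in> lat" "v' \<in> lat" by (simp_all add: v_def v'_def lat_diff qi_lat)
      have i1: "real (l j) * h - 2 * real DIM('a) * \<delta> \<le> \<delta> * max (norm v) (norm v')"
        using mc lb[OF j] mm by linarith
      have i2: "\<delta> * max (norm v) (norm v') \<le> (real (l j) + 1) * h + 2 * real DIM('a) * \<delta>"
        using mc lb[OF j] mm by linarith
      show "(z (2 * j + 1) - z (2 * j), z (2 * j + 2) - z (2 * j + 1)) \<in> win \<delta> h (l j)"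
        unfolding zv win_def using vl i1 i2 by (simp only: mem_Collect_eq case_prod_conv)
    qed
    have e1: "\<omega> \<in> ev1 M Phi \<delta> k z"
      unfolding ev1_def
    proof (intro InterI)
      fix S assume "S \<in> (\<lambda>i. {\<omega> \<in> space M. 1 \<le> card (Phi \<omega> \<inter> cube \<delta> (z i))}) ` {..2 * k}"
      then obtain i where i: "i \<le> 2 * k" and S: "S = {\<omega> \<in> space M. 1 \<le> card (Phi \<omega> \<inter> cube \<delta> (z i))}" by auto
      have "x i \<in> Phi \<omega> \<inter> cube \<delta> (z i)" using i chain_inS[OF ch] by (simp add: z_def cube_def)
      hence "0 < card (Phi \<omega> \<inter> cube \<delta> (z i))" using fin[of "z i"] by (auto simp: card_gt_0_iff)
      thus "\<omega> \<in> S" using S \<omega> by simp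
    qed
    have "\<omega> \<in> (\<Union>z\<in>{z\<in>(paths \<delta> h K k l :: (nat \<Rightarrow> 'a) set). inj_on z {..2 * k}}. ev1 M Phi \<delta> k z)"
      by (rule UN_I[of z]) (use zp True e1 in simp_all)
    hence "\<omega> \<in> (\<Union>l\<in>levels k H. \<Union>z\<in>{z\<in>(paths \<delta> h K k l :: (nat \<Rightarrow> 'a) set). inj_on z {..2 * k}}. ev1 M Phi \<delta> k z)"
      by (rule UN_I[OF lev])
    thus ?thesis unfolding GG_def by (rule UnI2)
  next
    case False
    then obtain i i' where ii: "i \<le> 2 * k" "i' \<le> 2 * k" "i \<noteq> i'" "z i = z i'"
      by (metis inj_onI atMost_iff)
    define w where "w = qi \<delta> (x i)"
    have w': "qi \<delta> (x i') = w" using ii by (simp add: z_def w_def)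
    have wl: "w \<in> latball \<delta> 0 \<rho>"
    proof -
      have "\<delta> * norm w \<le> norm (x i) + DIM('a) * \<delta>" unfolding w_def by (rule qn)
      also have "\<dots> \<le> K + i * R + DIM('a) * \<delta>" using xn[of i] by simp
      also have "\<dots> \<le> \<rho>" unfolding rho using ii(1) R(2) by (simp add: mult_right_mono)
      finally show ?thesis unfolding latball_def w_def using qi_lat d by simp
    qed
    have "x i \<noteq> x i'" using chain_inj[OF ch] ii(3) by (simp add: inj_eq)
    moreover have "{x i, x i'} \<subseteq> Phi \<omega> \<inter> cube \<delta> w"
      using chain_inS[OF ch] w' by (simp add: cube_def w_def)
    ultimately have "2 \<le> card (Phi \<omega> \<inter> cube \<delta> w)"
      using card_mono[OF fin[of w]] by (metis card_2_iff)
    hence "\<omega> \<in> {\<omega> \<in> space M. 2 \<le> card (Phi \<omega> \<inter> cube \<delta> w)}" using \<omega> by simp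
    hence "\<omega> \<in> badev M Phi \<delta> \<rho>" unfolding badev_def by (rule UN_I[OF wl])
    thus ?thesis unfolding GG_def by (rule UnI1)
  qed
qed

lemma ev_cube_sets:
  fixes Phi :: "'w \<Rightarrow> 'a::euclidean_space set"
  assumes Hp: "homogeneous_PPP M lam Phi" and d: "\<delta> > 0"
  shows "{\<omega>\<in>space M. Q (card (Phi \<omega> \<inter> cube \<delta> w))} \<in> sets M"
  by (rule ppp_ev_sets[OF Hp cube_borel cube_bounded[OF d]])

lemma ev1_sets:
  fixes Phi :: "'w \<Rightarrow> 'a::euclidean_space set"
  assumes Hp: "homogeneous_PPP M lam Phi" and d: "\<delta> > 0"
  shows "ev1 M Phi \<delta> k z \<in> sets M"
  unfolding ev1_def by (rule sets.finite_INT) (auto intro: ev_cube_sets[OF Hp d])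

lemma ev1_prob:
  fixes Phi :: "'w \<Rightarrow> 'a::euclidean_space set"
  assumes Hp: "homogeneous_PPP M lam Phi" and d: "\<delta> > 0" and inj: "inj_on z {..2 * k}"
  shows "measure M (ev1 M Phi \<delta> k z) \<le> (lam * \<delta> ^ DIM('a)) ^ (2 * k + 1)"
proof -
  have dj: "disjoint_family_on (\<lambda>i. cube \<delta> (z i)) {..2 * k}"
    unfolding disjoint_family_on_def
  proof (intro ballI impI)
    fix i j assume "i \<in> {..2 * k}" "j \<in> {..2 * k}" "i \<noteq> j"
    hence "z i \<noteq> z j" using inj by (auto dest: inj_onD)
    thus "cube \<delta> (z i) \<inter> cube \<delta> (z j) = {}" by (auto simp: cube_def)
  qed
  have "measure M (ev1 M Phi \<delta> k z) = (\<Prod>i\<in>{..2 * k}. measure M {\<omega>\<in>space M. 1 \<le> card (Phi \<omega> \<inter> cube \<delta> (z i))})"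
    unfolding ev1_def
    by (rule ppp_indep[OF Hp, of "{..2 * k}" "\<lambda>i. cube \<delta> (z i)"]) (use dj cube_borel cube_bounded[OF d] in auto)
  also have "\<dots> \<le> (\<Prod>i\<in>{..2 * k}. lam * \<delta> ^ DIM('a))"
  proof (rule prod_mono)
    fix i assume "i \<in> {..2 * k}"
    have "measure M {\<omega>\<in>space M. 1 \<le> card (Phi \<omega> \<inter> cube \<delta> (z i))} \<le> lam * measure lborel (cube \<delta> (z i))"
      by (rule ppp_ge1[OF Hp cube_borel cube_bounded[OF d]])
    also have "\<dots> \<le> lam * \<delta> ^ DIM('a)"
      using cube_measure[OF d, of "z i"] ppp_lam[OF Hp] by (intro mult_left_mono) auto
    finally show "0 \<le> measure M {\<omega>\<in>space M. 1 \<le> card (Phi \<omega> \<inter> cube \<delta> (z i))} \<and>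
      measure M {\<omega>\<in>space M. 1 \<le> card (Phi \<omega> \<inter> cube \<delta> (z i))} \<le> lam * \<delta> ^ DIM('a)" by simp
  qed
  also have "\<dots> = (lam * \<delta> ^ DIM('a)) ^ (2 * k + 1)" by simp
  finally show ?thesis .
qed

lemma badev_sets:
  fixes Phi :: "'w \<Rightarrow> 'a::euclidean_space set" and \<delta> \<rho> :: real
  assumes Hp: "homogeneous_PPP M lam Phi" and d: "\<delta> > 0" and r: "\<rho> \<ge> 0"
  shows "badev M Phi \<delta> \<rho> \<in> sets M"
  unfolding badev_def
  by (rule sets.finite_UN) (use latball_finite[OF d r r, where 'a='a] ev_cube_sets[OF Hp d] in auto)

lemma badev_prob:
  fixes Phi :: "'w \<Rightarrow> 'a::euclidean_space set" and \<delta> \<rho> :: real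
  assumes Hp: "homogeneous_PPP M lam Phi" and d: "\<delta> > 0" and r: "\<rho> \<ge> 0"
  shows "measure M (badev M Phi \<delta> \<rho>) \<le> card (latball \<delta> 0 \<rho> :: 'a set) * (lam * \<delta> ^ DIM('a)) ^ 2"
proof -
  have "measure M (badev M Phi \<delta> \<rho>) \<le> (\<Sum>w\<in>(latball \<delta> 0 \<rho> :: 'a set). measure M {\<omega>\<in>space M. 2 \<le> card (Phi \<omega> \<inter> cube \<delta> w)})"
    unfolding badev_def by (rule measure_UNION_le) (use latball_finite[OF d r r, where 'a='a] ev_cube_sets[OF Hp d] in auto)
  also have "\<dots> \<le> (\<Sum>w\<in>(latball \<delta> 0 \<rho> :: 'a set). (lam * \<delta> ^ DIM('a)) ^ 2)"
  proof (rule sum_mono)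
    fix w :: 'a
    have "measure M {\<omega>\<in>space M. 2 \<le> card (Phi \<omega> \<inter> cube \<delta> w)} \<le> (lam * measure lborel (cube \<delta> w)) ^ 2"
      by (rule ppp_ge2[OF Hp cube_borel cube_bounded[OF d]])
    also have "\<dots> \<le> (lam * \<delta> ^ DIM('a)) ^ 2"
      using cube_measure[OF d, of w] ppp_lam[OF Hp] by (intro power_mono mult_left_mono) auto
    finally show "measure M {\<omega>\<in>space M. 2 \<le> card (Phi \<omega> \<inter> cube \<delta> w)} \<le> (lam * \<delta> ^ DIM('a)) ^ 2" .
  qed
  also have "\<dots> = card (latball \<delta> 0 \<rho> :: 'a set) * (lam * \<delta> ^ DIM('a)) ^ 2" by simp
  finally show ?thesis .
qed

lemma GG_sets_prob:
  fixes Phi :: "'w \<Rightarrow> 'a::euclidean_space set" and \<delta> h K \<rho> :: real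
  assumes Hp: "homogeneous_PPP M lam Phi" and d: "\<delta> > 0" and r: "\<rho> \<ge> 0" and h: "h \<ge> 0" and K: "K \<ge> 0"
  shows "GG M Phi \<delta> h K k H \<rho> \<in> sets M"
    "measure M (GG M Phi \<delta> h K k H \<rho>) \<le> card (latball \<delta> 0 \<rho> :: 'a set) * (lam * \<delta> ^ DIM('a)) ^ 2 +
       (\<Sum>l\<in>levels k H. card (paths \<delta> h K k l :: (nat \<Rightarrow> 'a) set) * (lam * \<delta> ^ DIM('a)) ^ (2 * k + 1))"
proof -
  define Z where "Z l = {z\<in>(paths \<delta> h K k l :: (nat \<Rightarrow> 'a) set). inj_on z {..2 * k}}" for l
  define U where "U l = (\<Union>z\<in>Z l. ev1 M Phi \<delta> k z)" for l
  have fZ: "finite (Z l)" for l unfolding Z_def by (rule finite_subset[OF _ paths_card(1)[OF d h K]]) auto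
  have Us: "U l \<in> sets M" for l
    unfolding U_def by (rule sets.finite_UN) (use fZ ev1_sets[OF Hp d] in auto)
  have Uall: "(\<Union>l\<in>levels k H. U l) \<in> sets M"
    by (rule sets.finite_UN) (use levels_finite Us in auto)
  have GGe: "GG M Phi \<delta> h K k H \<rho> = badev M Phi \<delta> \<rho> \<union> (\<Union>l\<in>levels k H. U l)"
    unfolding GG_def U_def Z_def by simp
  show "GG M Phi \<delta> h K k H \<rho> \<in> sets M" unfolding GGe using badev_sets[OF Hp d r] Uall by blast
  have pU: "measure M (U l) \<le> card (paths \<delta> h K k l :: (nat \<Rightarrow> 'a) set) * (lam * \<delta> ^ DIM('a)) ^ (2 * k + 1)" for l
  proof -
    have "measure M (U l) \<le> (\<Sum>z\<in>Z l. measure M (ev1 M Phi \<delta> k z))"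
      unfolding U_def by (rule measure_UNION_le) (use fZ ev1_sets[OF Hp d] in auto)
    also have "\<dots> \<le> (\<Sum>z\<in>Z l. (lam * \<delta> ^ DIM('a)) ^ (2 * k + 1))"
      by (rule sum_mono) (rule ev1_prob[OF Hp d], simp add: Z_def)
    also have "\<dots> = card (Z l) * (lam * \<delta> ^ DIM('a)) ^ (2 * k + 1)" by simp
    also have "\<dots> \<le> card (paths \<delta> h K k l :: (nat \<Rightarrow> 'a) set) * (lam * \<delta> ^ DIM('a)) ^ (2 * k + 1)"
    proof (rule mult_right_mono)
      have "card (Z l) \<le> card (paths \<delta> h K k l :: (nat \<Rightarrow> 'a) set)"
        unfolding Z_def by (rule card_mono[OF paths_card(1)[OF d h K]]) auto
      thus "real (card (Z l)) \<le> real (card (paths \<delta> h K k l :: (nat \<Rightarrow> 'a) set))" by simp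
      show "0 \<le> (lam * \<delta> ^ DIM('a)) ^ (2 * k + 1)" using ppp_lam[OF Hp] d by simp
    qed
    finally show ?thesis .
  qed
  have "measure M (GG M Phi \<delta> h K k H \<rho>) \<le> measure M (badev M Phi \<delta> \<rho>) + measure M (\<Union>l\<in>levels k H. U l)"
    unfolding GGe by (rule measure_Un_le[OF badev_sets[OF Hp d r] Uall])
  also have "measure M (\<Union>l\<in>levels k H. U l) \<le> (\<Sum>l\<in>levels k H. measure M (U l))"
    by (rule measure_UNION_le) (use levels_finite Us in auto)
  also have "\<dots> \<le> (\<Sum>l\<in>levels k H. card (paths \<delta> h K k l :: (nat \<Rightarrow> 'a) set) * (lam * \<delta> ^ DIM('a)) ^ (2 * k + 1))"
    by (rule sum_mono) (rule pU)
  finally show "measure M (GG M Phi \<delta> h K k H \<rho>) \<le> card (latball \<delta> 0 \<rho> :: 'a set) * (lam * \<delta> ^ DIM('a)) ^ 2 +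
       (\<Sum>l\<in>levels k H. card (paths \<delta> h K k l :: (nat \<Rightarrow> 'a) set) * (lam * \<delta> ^ DIM('a)) ^ (2 * k + 1))"
    using badev_prob[OF Hp d r] by linarith
qed

lemma paths_bound:
  fixes \<delta> h R K lam :: real and H k :: nat and l :: "nat \<Rightarrow> nat"
  assumes d: "\<delta> > 0" and R: "R > 0" and H: "H \<ge> 1" and h: "h = R / H" and K: "K \<ge> 0"
    and small: "6 * DIM('a) * \<delta> \<le> h" "2 * DIM('a) * \<delta> \<le> 1" and lam: "lam > 0"
    and l: "l \<in> levels k H"
  shows "card (paths \<delta> h K k l :: (nat \<Rightarrow> 'a::euclidean_space) set) * (lam * \<delta> ^ DIM('a)) ^ (2 * k + 1) \<le>
    lam * measure lborel (ball (0::'a) 1) * (K + 1) ^ DIM('a) *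
    (lam ^ 2 * (4 * measure lborel (ball (0::'a) 1) ^ 2 * DIM('a) * (3 * R) ^ (2 * DIM('a))) / H) ^ k"
proof -
  define n where "n = DIM('a)"
  define \<kappa> where "\<kappa> = measure lborel (ball (0::'a) 1)"
  define \<mu> where "\<mu> = lam * \<delta> ^ n"
  define C1 where "C1 = 4 * \<kappa> ^ 2 * n * (3 * R) ^ (2 * n)"
  define cSt where "cSt = real (card (latball \<delta> 0 (K + real DIM('a) * \<delta>) :: 'a set))"
  define cW where "cW j = real (card (win \<delta> h (l j) :: ('a \<times> 'a) set))" for j
  have h0: "h \<ge> 0" using R H h by simp
  have mu0: "\<mu> \<ge> 0" using lam d by (simp add: \<mu>_def)
  have k0: "\<kappa> \<ge> 0" by (simp add: \<kappa>_def)
  have lj: "l j \<le> H" if "j < k" for j using l that unfolding levels_def by (auto simp: PiE_iff)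
  have "real (card (paths \<delta> h K k l :: (nat \<Rightarrow> 'a) set)) \<le> real (card (latball \<delta> 0 (K + real DIM('a) * \<delta>) :: 'a set) *
       (\<Prod>j<k. card (win \<delta> h (l j) :: ('a \<times> 'a) set)))"
    by (subst of_nat_le_iff) (rule paths_card(2)[OF d h0 K])
  also have "\<dots> = cSt * (\<Prod>j<k. cW j)" by (simp add: cSt_def cW_def)
  finally have cp: "real (card (paths \<delta> h K k l :: (nat \<Rightarrow> 'a) set)) \<le> cSt * (\<Prod>j<k. cW j)" .
  have "real (card (paths \<delta> h K k l :: (nat \<Rightarrow> 'a) set)) * \<mu> ^ (2 * k + 1) \<le> cSt * (\<Prod>j<k. cW j) * \<mu> ^ (2 * k + 1)"
    using cp mu0 by (intro mult_right_mono) auto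
  also have "\<dots> = (cSt * \<mu>) * (\<Prod>j<k. cW j * \<mu> ^ 2)"
    by (simp add: prod.distrib power_mult[symmetric] mult_ac)
  also have "\<dots> \<le> (lam * \<kappa> * (K + 1) ^ n) * (\<Prod>j<k. lam ^ 2 * C1 / H)"
  proof (rule mult_mono)
    have "cSt * \<delta> ^ n \<le> \<kappa> * (K + 1) ^ n"
      unfolding cSt_def \<kappa>_def n_def by (rule ball_bound'[OF d]) (use K d small in \<open>auto simp: mult.commute mult.left_commute\<close>)
    hence "lam * (cSt * \<delta> ^ n) \<le> lam * (\<kappa> * (K + 1) ^ n)" using lam by (intro mult_left_mono) auto
    thus "cSt * \<mu> \<le> lam * \<kappa> * (K + 1) ^ n" by (simp add: \<mu>_def mult_ac)
    show "(\<Prod>j<k. cW j * \<mu> ^ 2) \<le> (\<Prod>j<k. lam ^ 2 * C1 / H)"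
    proof (rule prod_mono)
      fix j assume j: "j \<in> {..<k}"
      have "cW j * \<delta> ^ (2 * n) \<le> C1 / H"
        unfolding cW_def C1_def \<kappa>_def n_def
        by (rule win_bound[OF d R H h lj small(1)]) (use j in simp)
      hence i: "lam ^ 2 * (cW j * \<delta> ^ (2 * n)) \<le> lam ^ 2 * (C1 / H)" by (intro mult_left_mono) auto
      have eq: "cW j * \<mu> ^ 2 = lam ^ 2 * (cW j * \<delta> ^ (2 * n))"
        by (simp add: \<mu>_def power_mult_distrib power_mult[symmetric] mult_ac)
      have "cW j * \<mu> ^ 2 \<le> lam ^ 2 * (C1 / H)" unfolding eq by (rule i)
      moreover have "0 \<le> cW j * \<mu> ^ 2" by (simp add: cW_def)
      ultimately show "0 \<le> cW j * \<mu> ^ 2 \<and> cW j * \<mu> ^ 2 \<le> lam ^ 2 * C1 / H"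
        by simp
    qed
    show "0 \<le> (\<Prod>j<k. cW j * \<mu> ^ 2)" by (intro prod_nonneg) (simp add: cW_def)
    show "0 \<le> lam * \<kappa> * (K + 1) ^ n" using lam k0 K by simp
  qed
  also have "\<dots> = lam * \<kappa> * (K + 1) ^ n * (lam ^ 2 * C1 / H) ^ k" by simp
  finally show ?thesis unfolding \<mu>_def C1_def \<kappa>_def n_def by (simp add: mult_ac)
qed

lemma GG_total:
  fixes Phi :: "'w \<Rightarrow> 'a::euclidean_space set" and \<delta> h R K :: real and H k :: nat
  assumes Hp: "homogeneous_PPP M lam Phi" and d: "\<delta> > 0" and R: "R > 0" and H: "H \<ge> 1" and kH: "k \<le> H"
    and h: "h = R / H" and small: "6 * DIM('a) * \<delta> \<le> h" "2 * DIM('a) * \<delta> \<le> 1" and K: "K \<ge> 0"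
    and rho: "\<rho> = K + 2 * k * R + DIM('a) * \<delta>"
  shows "measure M (GG M Phi \<delta> h K k H \<rho>) \<le>
    measure lborel (ball (0::'a) 1) * (K + 2 * k * R + 1) ^ DIM('a) * lam ^ 2 * \<delta> ^ DIM('a) +
    lam * measure lborel (ball (0::'a) 1) * (K + 1) ^ DIM('a) *
    (2 * (lam ^ 2 * (4 * measure lborel (ball (0::'a) 1) ^ 2 * DIM('a) * (3 * R) ^ (2 * DIM('a))))) ^ k / fact k"
proof -
  define n where "n = DIM('a)"
  define \<kappa> where "\<kappa> = measure lborel (ball (0::'a) 1)"
  define X where "X = lam ^ 2 * (4 * \<kappa> ^ 2 * n * (3 * R) ^ (2 * n))"
  define T where "T = lam * \<kappa> * (K + 1) ^ n * (X / H) ^ k"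
  have lam: "lam > 0" by (rule ppp_lam[OF Hp])
  have h0: "h \<ge> 0" using R H h by simp
  have k0: "\<kappa> \<ge> 0" by (simp add: \<kappa>_def)
  have X0: "X \<ge> 0" using k0 R by (simp add: X_def)
  have T0: "T \<ge> 0" using lam k0 K X0 by (simp add: T_def)
  have nd: "0 \<le> real n * \<delta>" using d by simp
  have r0: "\<rho> \<ge> 0" using rho K R nd n_def by simp
  have main: "measure M (GG M Phi \<delta> h K k H \<rho>) \<le> card (latball \<delta> 0 \<rho> :: 'a set) * (lam * \<delta> ^ n) ^ 2 +
       (\<Sum>l\<in>levels k H. card (paths \<delta> h K k l :: (nat \<Rightarrow> 'a) set) * (lam * \<delta> ^ n) ^ (2 * k + 1))"
    unfolding n_def by (rule GG_sets_prob(2)[OF Hp d r0 h0 K])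
  have b1: "card (latball \<delta> 0 \<rho> :: 'a set) * (lam * \<delta> ^ n) ^ 2 \<le> \<kappa> * (K + 2 * k * R + 1) ^ n * lam ^ 2 * \<delta> ^ n"
  proof -
    have "card (latball \<delta> 0 \<rho> :: 'a set) * \<delta> ^ n \<le> \<kappa> * (K + 2 * k * R + 1) ^ n"
      unfolding \<kappa>_def n_def by (rule ball_bound'[OF d r0]) (use rho small(2) in \<open>simp add: algebra_simps\<close>)
    hence "(card (latball \<delta> 0 \<rho> :: 'a set) * \<delta> ^ n) * (lam ^ 2 * \<delta> ^ n) \<le> (\<kappa> * (K + 2 * k * R + 1) ^ n) * (lam ^ 2 * \<delta> ^ n)"
      using d by (intro mult_right_mono) auto
    thus ?thesis by (simp add: power_mult_distrib power2_eq_square mult_ac)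
  qed
  have b2: "(\<Sum>l\<in>levels k H. card (paths \<delta> h K k l :: (nat \<Rightarrow> 'a) set) * (lam * \<delta> ^ n) ^ (2 * k + 1)) \<le>
      real (card (levels k H)) * T"
  proof (rule sum_bounded_above)
    fix l assume l: "l \<in> levels k H"
    show "card (paths \<delta> h K k l :: (nat \<Rightarrow> 'a) set) * (lam * \<delta> ^ n) ^ (2 * k + 1) \<le> T"
      unfolding T_def X_def \<kappa>_def n_def
      using paths_bound[where 'a='a, OF d R H h K small lam l] by (simp add: mult_ac)
  qed
  also have "\<dots> \<le> real ((H + k) ^ k) / fact k * T"
    by (rule mult_right_mono[OF levels_card T0])
  also have "\<dots> = lam * \<kappa> * (K + 1) ^ n * ((real (H + k) / H) * X) ^ k / fact k"
  proof -
    have e0: "real (H + k) / H * X = real (H + k) * (X / H)" by simp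
    have e1: "(real (H + k) / H * X) ^ k = real (H + k) ^ k * (X / H) ^ k"
      unfolding e0 by (rule power_mult_distrib)
    show ?thesis unfolding e1 T_def by (simp add: mult_ac)
  qed
  also have "\<dots> \<le> lam * \<kappa> * (K + 1) ^ n * (2 * X) ^ k / fact k"
  proof -
    have "real (H + k) / H \<le> 2" using kH H by (simp add: divide_le_eq)
    hence "(real (H + k) / H) * X \<le> 2 * X" using X0 by (intro mult_right_mono) auto
    hence "((real (H + k) / H) * X) ^ k \<le> (2 * X) ^ k" using X0 H by (intro power_mono) auto
    hence "lam * \<kappa> * (K + 1) ^ n * ((real (H + k) / H) * X) ^ k \<le> lam * \<kappa> * (K + 1) ^ n * (2 * X) ^ k"
      using lam k0 K by (intro mult_left_mono) auto
    thus ?thesis by (intro divide_right_mono) auto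
  qed
  finally have b2': "(\<Sum>l\<in>levels k H. card (paths \<delta> h K k l :: (nat \<Rightarrow> 'a) set) * (lam * \<delta> ^ n) ^ (2 * k + 1)) \<le>
      lam * \<kappa> * (K + 1) ^ n * (2 * X) ^ k / fact k" .
  show ?thesis using main b1 b2' unfolding X_def \<kappa>_def n_def by linarith
qed

lemma fact_seq_small:
  fixes c e :: real
  assumes "e > 0"
  shows "\<exists>k. c ^ k / fact k < e"
proof -
  have "(\<lambda>k. inverse (fact k) * c ^ k) \<longlonglongrightarrow> 0"
    by (rule summable_LIMSEQ_zero[OF summable_exp])
  hence "eventually (\<lambda>k. inverse (fact k) * c ^ k < e) sequentially"
    using assms by (rule order_tendstoD(2))
  then obtain k where "inverse (fact k) * c ^ k < e" by (auto simp: eventually_sequentially)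
  thus ?thesis by (auto simp: field_simps)
qed

lemma exists_G:
  fixes Phi :: "'w \<Rightarrow> 'a::euclidean_space set" and K R \<epsilon> :: real
  assumes Hp: "homogeneous_PPP M lam Phi" and K: "K \<ge> 0" and R: "R > 0" and e: "\<epsilon> > 0"
  shows "\<exists>G\<in>sets M. measure M G \<le> \<epsilon> \<and>
    (\<forall>\<omega>\<in>space M. \<forall>x. second_order_descending_chain (Phi \<omega>) x \<and> norm (x 0) \<le> K \<and> Mx x 0 \<le> R \<longrightarrow> \<omega> \<in> G)"
proof -
  define n where "n = DIM('a)"
  define \<kappa> where "\<kappa> = measure lborel (ball (0::'a) 1)"
  define A where "A = lam * \<kappa> * (K + 1) ^ n"
  define c where "c = 2 * (lam ^ 2 * (4 * \<kappa> ^ 2 * n * (3 * R) ^ (2 * n)))"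
  have lam: "lam > 0" by (rule ppp_lam[OF Hp])
  have k0: "\<kappa> \<ge> 0" by (simp add: \<kappa>_def)
  have A0: "A \<ge> 0" using lam k0 K by (simp add: A_def)
  have n1: "n \<ge> 1" unfolding n_def using DIM_positive[where 'a='a] by linarith
  obtain k where kk: "c ^ k / fact k < \<epsilon> / (2 * (A + 1))"
    using fact_seq_small[of "\<epsilon> / (2 * (A + 1))" c] e A0 by auto
  have pA: "A * (c ^ k / fact k) \<le> \<epsilon> / 2"
  proof -
    have "A * (c ^ k / fact k) \<le> A * (\<epsilon> / (2 * (A + 1)))" using kk A0 by (intro mult_left_mono) auto
    also have "\<dots> \<le> \<epsilon> / 2" using A0 e by (simp add: field_simps)
    finally show ?thesis .
  qed
  define H where "H = k + 1"
  define h where "h = R / H"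
  define B where "B = \<kappa> * (K + 2 * k * R + 1) ^ n * lam ^ 2"
  have B0: "B \<ge> 0" using k0 K R by (simp add: B_def)
  have h0: "h > 0" using R by (simp add: h_def H_def)
  define \<delta> where "\<delta> = min (min (h / (6 * n)) (1 / (2 * n))) (min 1 (\<epsilon> / (2 * (B + 1))))"
  have d: "\<delta> > 0" using h0 n1 e B0 by (simp add: \<delta>_def)
  have s1: "6 * n * \<delta> \<le> h"
  proof -
    have "\<delta> \<le> h / (6 * n)" by (simp add: \<delta>_def)
    thus ?thesis using n1 by (simp add: le_divide_eq mult.commute)
  qed
  have s2: "2 * n * \<delta> \<le> 1"
  proof -
    have "\<delta> \<le> 1 / (2 * n)" by (simp add: \<delta>_def)
    thus ?thesis using n1 by (simp add: le_divide_eq mult.commute)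
  qed
  have pB: "B * \<delta> ^ n \<le> \<epsilon> / 2"
  proof -
    have d1: "\<delta> \<le> 1" by (simp add: \<delta>_def)
    have "\<delta> ^ n = \<delta> * \<delta> ^ (n - 1)" using n1 by (simp add: power_eq_if)
    also have "\<dots> \<le> \<delta> * 1" using d d1 by (intro mult_left_mono power_le_one) auto
    finally have "\<delta> ^ n \<le> \<delta>" by simp
    hence "B * \<delta> ^ n \<le> B * \<delta>" using B0 by (intro mult_left_mono) auto
    also have "\<dots> \<le> B * (\<epsilon> / (2 * (B + 1)))" using B0 by (intro mult_left_mono) (auto simp: \<delta>_def)
    also have "\<dots> \<le> \<epsilon> / 2" using B0 e by (simp add: field_simps)
    finally show ?thesis .
  qed
  define \<rho> where "\<rho> = K + 2 * k * R + DIM('a) * \<delta>"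
  have H1: "H \<ge> 1" "k \<le> H" by (simp_all add: H_def)
  have r0: "\<rho> \<ge> 0" using K R d by (simp add: \<rho>_def)
  show ?thesis
  proof (rule bexI[of _ "GG M Phi \<delta> h K k H \<rho>"], intro conjI ballI allI impI)
    show "GG M Phi \<delta> h K k H \<rho> \<in> sets M"
      by (rule GG_sets_prob(1)[OF Hp d r0 less_imp_le[OF h0] K])
    have "measure M (GG M Phi \<delta> h K k H \<rho>) \<le> B * \<delta> ^ n + A * (c ^ k / fact k)"
      using GG_total[OF Hp d R H1(1) H1(2) h_def s1[unfolded n_def] s2[unfolded n_def] K \<rho>_def]
      unfolding A_def B_def c_def \<kappa>_def n_def by (simp add: mult_ac)
    thus "measure M (GG M Phi \<delta> h K k H \<rho>) \<le> \<epsilon>" using pA pB by linarith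
  next
    fix \<omega> x assume \<omega>: "\<omega> \<in> space M"
      and c: "second_order_descending_chain (Phi \<omega>) x \<and> norm (x 0) \<le> K \<and> Mx x 0 \<le> R"
    show "\<omega> \<in> GG M Phi \<delta> h K k H \<rho>"
      by (rule chain_in_GG[OF Hp \<omega>]) (use c R d H1 h_def \<rho>_def in auto)
  qed
qed

theorem mainTheorem9:
  fixes M :: "'w measure" and lam :: real and Phi :: "'w \<Rightarrow> 'a::euclidean_space set"
  assumes "homogeneous_PPP M lam Phi"
  shows "AE \<omega> in M. \<not> (\<exists>x. second_order_descending_chain (Phi \<omega>) x)"
proof -
  note Hp = assms
  interpret prob_space M by (rule ppp_prob_space[OF Hp])
  define P where "P K R G \<longleftrightarrow> (\<forall>\<omega>\<in>space M. \<forall>x. second_order_descending_chain (Phi \<omega>) x \<and>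
      norm (x 0) \<le> real K \<and> Mx x 0 \<le> real R + 1 \<longrightarrow> \<omega> \<in> G)" for K R :: nat and G
  define G where "G K R m = (SOME G. G \<in> sets M \<and> measure M G \<le> 1 / Suc m \<and> P K R G)" for K R m :: nat
  have Gp: "G K R m \<in> sets M \<and> measure M (G K R m) \<le> 1 / Suc m \<and> P K R (G K R m)" for K R m
  proof -
    have "\<exists>G. G \<in> sets M \<and> measure M G \<le> 1 / Suc m \<and> P K R G"
    proof -
      obtain G' where G': "G' \<in> sets M" "measure M G' \<le> 1 / Suc m"
        "\<forall>\<omega>\<in>space M. \<forall>x. second_order_descending_chain (Phi \<omega>) x \<and> norm (x 0) \<le> real K \<and>
          Mx x 0 \<le> real R + 1 \<longrightarrow> \<omega> \<in> G'"
        using exists_G[OF Hp, of "real K" "real R + 1" "1 / Suc m"] by auto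
      have "P K R G'" unfolding P_def by (rule G'(3))
      thus ?thesis using G'(1,2) by blast
    qed
    thus ?thesis unfolding G_def by (rule someI_ex)
  qed
  define NN where "NN K R = (\<Inter>m. G K R m)" for K R
  have NNs: "NN K R \<in> sets M" for K R unfolding NN_def
  proof -
    have Gs: "G K R m \<in> sets M" for m using Gp[of K R m] by (rule conjunct1)
    show "(\<Inter>m. G K R m) \<in> sets M" by (rule sets.countable_INT) (simp_all add: image_subset_iff Gs)
  qed
  have NN0: "NN K R \<in> null_sets M" for K R
  proof -
    have "measure M (NN K R) \<le> 0"
    proof (rule ccontr)
      assume "\<not> measure M (NN K R) \<le> 0"
      hence pos: "measure M (NN K R) > 0" by simp
      obtain n where n: "n > 0" "inverse (real n) < measure M (NN K R)"
        using ex_inverse_of_nat_less[OF pos] by blast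
      define m where "m = n - 1"
      have "Suc m = n" using n(1) by (simp add: m_def)
      hence m: "inverse (real (Suc m)) < measure M (NN K R)" using n(2) by simp
      have "measure M (NN K R) \<le> measure M (G K R m)"
        by (rule finite_measure_mono) (use Gp in \<open>auto simp: NN_def\<close>)
      also have "\<dots> \<le> 1 / Suc m" using Gp by blast
      finally show False using m by (simp add: inverse_eq_divide)
    qed
    hence "measure M (NN K R) = 0" by (simp add: antisym)
    hence "emeasure M (NN K R) = 0" by (simp add: emeasure_eq_measure)
    thus ?thesis using NNs by blast
  qed
  define N where "N = (\<Union>K. \<Union>R. NN K R)"
  have Nn: "N \<in> null_sets M" unfolding N_def by (intro null_sets_UN NN0)
  show ?thesis
  proof (rule AE_I'[OF Nn])
    show "{\<omega> \<in> space M. \<not> \<not> (\<exists>x. second_order_descending_chain (Phi \<omega>) x)} \<subseteq> N"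
    proof
      fix \<omega> assume "\<omega> \<in> {\<omega> \<in> space M. \<not> \<not> (\<exists>x. second_order_descending_chain (Phi \<omega>) x)}"
      then obtain x where \<omega>: "\<omega> \<in> space M" and c: "second_order_descending_chain (Phi \<omega>) x" by auto
      define K where "K = nat \<lceil>norm (x 0)\<rceil>"
      define R where "R = nat \<lceil>Mx x 0\<rceil>"
      have K: "norm (x 0) \<le> real K" unfolding K_def by linarith
      have R: "Mx x 0 \<le> real R + 1" unfolding R_def by linarith
      have "\<omega> \<in> G K R m" for m
      proof -
        have "P K R (G K R m)" using Gp[of K R m] by (rule conjunct2[THEN conjunct2])
        hence "\<forall>\<omega>\<in>space M. \<forall>x. second_order_descending_chain (Phi \<omega>) x \<and>
          norm (x 0) \<le> real K \<and> Mx x 0 \<le> real R + 1 \<longrightarrow> \<omega> \<in> G K R m" unfolding P_def .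
        thus ?thesis using \<omega> c K R by blast
      qed
      hence "\<omega> \<in> NN K R" by (simp add: NN_def)
      thus "\<omega> \<in> N" unfolding N_def by blast
    qed
  qed
qed

end
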